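(* Fix $\varepsilon\in(0,1)$ and let $\mathbf g=(g_1,g_2)$ be the flux carrier. For any $w\in H^1(\Omega_{a,b})$ with $w=0$ on the upper boundary $S_{2;a,b}=\{x\in\partial\Omega: x_2=f_2(x_1),\ a<x_1<b\}$, $$\int_{\Omega_{a,b}}g_1^2w^2\,dx\le C\Phi^2\varepsilon^2\int_{\Omega_{a,b}}|\partial_{x_2}w|^2\,dx.$$ Moreover, if $\gamma:=\max_{i=1,2}\sup_{x_1\in\mathbb{R}}|f_i''(x_1)f(x_1)|<\infty$, then $$|\mathbf g|\le\frac{C(\varepsilon)\Phi}{f(x_1)},\qquad|\nabla\mathbf g|\le\frac{C(\varepsilon,\gamma)\Phi}{f^2(x_1)},\qquad\int_{\Omega_{a,b}}|\nabla\mathbf g|^2+|\mathbf g|^4\,dx\le C(\varepsilon,\gamma)(\Phi^2+\Phi^4)\int_a^bf^{-3}(x_1)\,dx_1,$$ where $C(\varepsilon)$ depends on $\varepsilon$ and $C(\varepsilon,\gamma)$ on $\varepsilon$ and $\gamma$.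
   Context: $\Omega=\{(x_1,x_2):x_1\in\mathbb{R},\ f_1(x_1)<x_2<f_2(x_1)\}$ with $f_1,f_2$ smooth, $f=f_2-f_1$, $\bar f=(f_1+f_2)/2$, $\inf f=d>0$, $\max_i\|f_i'\|_{C(\mathbb{R})}=\beta<\infty$; $\Phi\ge0$; $a<b$, $\Omega_{a,b}=\{x\in\Omega:a<x_1<b\}$. Flux carrier: fix $\mu\in C^\infty(\mathbb{R})$ with $\mu(t)=0$ for $t\ge1$, $\mu(t)=1$ for $t\le0$; set $G(x)=\Phi\,\mu\big(1+\varepsilon\ln\frac{f_2(x_1)-x_2}{x_2-\bar f(x_1)}\big)$ if $x_2>\bar f(x_1)$, $G(x)=0$ if $x_2\le\bar f(x_1)$, and $\mathbf g=(g_1,g_2)=(\partial_{x_2}G,-\partial_{x_1}G)$. The constant $C$ in the first inequality does not depend on $\varepsilon$, $\Phi$, $a$, $b$. *)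

theory Defs
  imports "HOL-Analysis.Analysis"
begin

definition smooth_fun :: "(real \<Rightarrow> real) \<Rightarrow> bool" where
  "smooth_fun h \<longleftrightarrow> (\<forall>k x. ((deriv ^^ k) h) differentiable (at x))"

definition Omega :: "(real \<Rightarrow> real) \<Rightarrow> (real \<Rightarrow> real) \<Rightarrow> (real \<times> real) set" where
  "Omega f1 f2 = {x. f1 (fst x) < snd x \<and> snd x < f2 (fst x)}"

definition Omega_ab :: "(real \<Rightarrow> real) \<Rightarrow> (real \<Rightarrow> real) \<Rightarrow> real \<Rightarrow> real \<Rightarrow> (real \<times> real) set" where
  "Omega_ab f1 f2 a b = {x \<in> Omega f1 f2. a < fst x \<and> fst x < b}"

definition S2_ab :: "(real \<Rightarrow> real) \<Rightarrow> real \<Rightarrow> real \<Rightarrow> (real \<times> real) set" where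
  "S2_ab f2 a b = {(t, f2 t) | t. a < t \<and> t < b}"

definition C1_with_grad :: "(real \<times> real \<Rightarrow> real) \<Rightarrow> (real \<times> real \<Rightarrow> real) \<Rightarrow> (real \<times> real \<Rightarrow> real) \<Rightarrow> bool" where
  "C1_with_grad \<phi> p1 p2 \<longleftrightarrow> continuous_on UNIV p1 \<and> continuous_on UNIV p2 \<and>
     (\<forall>x. (\<phi> has_derivative (\<lambda>h. p1 x * fst h + p2 x * snd h)) (at x))"

definition sqint :: "(real \<times> real) set \<Rightarrow> (real \<times> real \<Rightarrow> real) \<Rightarrow> ennreal" where
  "sqint U u = (\<integral>\<^sup>+ x. indicator U x * ennreal ((u x)\<^sup>2) \<partial>lebesgue)"

definition H1_weak :: "(real \<times> real) set \<Rightarrow> (real \<times> real \<Rightarrow> real) \<Rightarrow> (real \<times> real \<Rightarrow> real) \<Rightarrow> (real \<times> real \<Rightarrow> real) \<Rightarrow> bool" where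
  "H1_weak U w v1 v2 \<longleftrightarrow>
     (\<lambda>x. indicator U x * w x) \<in> borel_measurable lebesgue \<and>
     (\<lambda>x. indicator U x * v1 x) \<in> borel_measurable lebesgue \<and>
     (\<lambda>x. indicator U x * v2 x) \<in> borel_measurable lebesgue \<and>
     sqint U w < \<infinity> \<and> sqint U v1 < \<infinity> \<and> sqint U v2 < \<infinity> \<and>
     (\<forall>\<psi> \<psi>1 \<psi>2. C1_with_grad \<psi> \<psi>1 \<psi>2 \<and> compact (closure {x. \<psi> x \<noteq> 0}) \<and>
          closure {x. \<psi> x \<noteq> 0} \<subseteq> U \<longrightarrow>
        (LINT x:U|lebesgue. w x * \<psi>1 x) = - (LINT x:U|lebesgue. v1 x * \<psi> x) \<and>
        (LINT x:U|lebesgue. w x * \<psi>2 x) = - (LINT x:U|lebesgue. v2 x * \<psi> x))"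

(* "w = 0 on S" in the trace sense: w is the H^1(U)-limit of C^1(R^2) functions vanishing on S *)
definition zero_trace_on :: "(real \<times> real) set \<Rightarrow> (real \<times> real) set \<Rightarrow> (real \<times> real \<Rightarrow> real) \<Rightarrow> (real \<times> real \<Rightarrow> real) \<Rightarrow> (real \<times> real \<Rightarrow> real) \<Rightarrow> bool" where
  "zero_trace_on U S w v1 v2 \<longleftrightarrow>
     (\<exists>\<phi> p1 p2. (\<forall>n. C1_with_grad (\<phi> n) (p1 n) (p2 n) \<and> (\<forall>x\<in>S. \<phi> n x = 0)) \<and>
        ((\<lambda>n. sqint U (\<lambda>x. \<phi> n x - w x)) \<longlonglongrightarrow> 0) \<and>
        ((\<lambda>n. sqint U (\<lambda>x. p1 n x - v1 x)) \<longlonglongrightarrow> 0) \<and>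
        ((\<lambda>n. sqint U (\<lambda>x. p2 n x - v2 x)) \<longlonglongrightarrow> 0))"

definition fluxG :: "(real \<Rightarrow> real) \<Rightarrow> (real \<Rightarrow> real) \<Rightarrow> (real \<Rightarrow> real) \<Rightarrow> real \<Rightarrow> real \<Rightarrow> real \<times> real \<Rightarrow> real" where
  "fluxG f1 f2 \<mu> \<epsilon> \<Phi> x =
     (let fb = (f1 (fst x) + f2 (fst x)) / 2 in
      if snd x > fb then \<Phi> * \<mu> (1 + \<epsilon> * ln ((f2 (fst x) - snd x) / (snd x - fb))) else 0)"

definition flux_g1 :: "(real \<Rightarrow> real) \<Rightarrow> (real \<Rightarrow> real) \<Rightarrow> (real \<Rightarrow> real) \<Rightarrow> real \<Rightarrow> real \<Rightarrow> real \<times> real \<Rightarrow> real" where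
  "flux_g1 f1 f2 \<mu> \<epsilon> \<Phi> x = deriv (\<lambda>t. fluxG f1 f2 \<mu> \<epsilon> \<Phi> (fst x, t)) (snd x)"

definition flux_g2 :: "(real \<Rightarrow> real) \<Rightarrow> (real \<Rightarrow> real) \<Rightarrow> (real \<Rightarrow> real) \<Rightarrow> real \<Rightarrow> real \<Rightarrow> real \<times> real \<Rightarrow> real" where
  "flux_g2 f1 f2 \<mu> \<epsilon> \<Phi> x = - deriv (\<lambda>t. fluxG f1 f2 \<mu> \<epsilon> \<Phi> (t, snd x)) (fst x)"

definition pd1 :: "(real \<times> real \<Rightarrow> real) \<Rightarrow> real \<times> real \<Rightarrow> real" where
  "pd1 u x = deriv (\<lambda>t. u (t, snd x)) (fst x)"

definition pd2 :: "(real \<times> real \<Rightarrow> real) \<Rightarrow> real \<times> real \<Rightarrow> real" where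
  "pd2 u x = deriv (\<lambda>t. u (fst x, t)) (snd x)"

definition flux_norm :: "(real \<Rightarrow> real) \<Rightarrow> (real \<Rightarrow> real) \<Rightarrow> (real \<Rightarrow> real) \<Rightarrow> real \<Rightarrow> real \<Rightarrow> real \<times> real \<Rightarrow> real" where
  "flux_norm f1 f2 \<mu> \<epsilon> \<Phi> x =
     sqrt ((flux_g1 f1 f2 \<mu> \<epsilon> \<Phi> x)\<^sup>2 + (flux_g2 f1 f2 \<mu> \<epsilon> \<Phi> x)\<^sup>2)"

definition flux_grad_norm :: "(real \<Rightarrow> real) \<Rightarrow> (real \<Rightarrow> real) \<Rightarrow> (real \<Rightarrow> real) \<Rightarrow> real \<Rightarrow> real \<Rightarrow> real \<times> real \<Rightarrow> real" where
  "flux_grad_norm f1 f2 \<mu> \<epsilon> \<Phi> x =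
     sqrt ((pd1 (flux_g1 f1 f2 \<mu> \<epsilon> \<Phi>) x)\<^sup>2 + (pd2 (flux_g1 f1 f2 \<mu> \<epsilon> \<Phi>) x)\<^sup>2 +
           (pd1 (flux_g2 f1 f2 \<mu> \<epsilon> \<Phi>) x)\<^sup>2 + (pd2 (flux_g2 f1 f2 \<mu> \<epsilon> \<Phi>) x)\<^sup>2)"

end

theory Submission
  imports Defs
begin


lemma ind_ennreal: "indicator A x * ennreal (f x) = ennreal (indicator A x * f x)"
  by (auto split: split_indicator)

lemma hardy_seg:
  fixes u u' :: "real \<Rightarrow> real"
  assumes ce: "c \<le> e" and eh: "e < h"
    and der: "\<And>y. c \<le> y \<Longrightarrow> y \<le> h \<Longrightarrow> (u has_real_derivative u' y) (at y)"
    and cont: "continuous_on {c..h} u'"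
  shows "integral {c..e} (\<lambda>y. (u y)\<^sup>2 / (h - y)\<^sup>2)
         \<le> 2 * ((u e)\<^sup>2 / (h - e)) + 4 * integral {c..e} (\<lambda>y. (u' y)\<^sup>2)"
proof -
  define v where "v y = (u y)\<^sup>2 / (h - y)" for y
  define v' where "v' y = 2 * u y * u' y / (h - y) + (u y)\<^sup>2 / (h - y)\<^sup>2" for y
  have sub: "{c..e} \<subseteq> {c..h}" using eh by auto
  have dv: "(v has_real_derivative v' y) (at y)" if "c \<le> y" "y \<le> e" for y
  proof -
    have hy: "h - y \<noteq> 0" using that eh by auto
    have "(v has_real_derivative (2 * u y * u' y * (h - y) - (u y)\<^sup>2 * (0 - 1)) / (h - y)\<^sup>2) (at y)"
      unfolding v_def using der[of y] that eh hy
      by (auto intro!: derivative_eq_intros simp: power2_eq_square)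
    moreover have "(2 * u y * u' y * (h - y) - (u y)\<^sup>2 * (0 - 1)) / (h - y)\<^sup>2 = v' y"
    proof -
      have gen: "(2*a*b*z - a\<^sup>2*(0-1))/z\<^sup>2 = 2*a*b/z + a\<^sup>2/z\<^sup>2" if "z \<noteq> 0" for a b z :: real
        using that by (simp add: power2_eq_square diff_divide_distrib add_divide_distrib)
      show ?thesis unfolding v'_def using gen[OF hy] by simp
    qed
    ultimately show ?thesis by simp
  qed
  have ucont: "continuous_on {c..e} u"
    by (rule continuous_at_imp_continuous_on) (use der eh in \<open>force intro: DERIV_isCont\<close>)
  have u'cont: "continuous_on {c..e} u'" using cont sub continuous_on_subset by blast
  have I1: "(v' has_integral v e - v c) {c..e}"
    by (rule fundamental_theorem_of_calculus[OF ce])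
       (use dv in \<open>auto simp: has_real_derivative_iff_has_vector_derivative[symmetric] intro: has_field_derivative_at_within\<close>)
  have c2: "continuous_on {c..e} (\<lambda>y. (u' y)\<^sup>2)" by (intro continuous_intros u'cont)
  have I2: "((\<lambda>y. (u' y)\<^sup>2) has_integral integral {c..e} (\<lambda>y. (u' y)\<^sup>2)) {c..e}"
    using integrable_continuous_interval[OF c2] by (simp add: integrable_integral)
  have c3: "continuous_on {c..e} (\<lambda>y. (u y)\<^sup>2 / (h - y)\<^sup>2)"
    using eh by (intro continuous_intros ucont) auto
  have I3: "((\<lambda>y. (u y)\<^sup>2 / (h - y)\<^sup>2) has_integral integral {c..e} (\<lambda>y. (u y)\<^sup>2 / (h - y)\<^sup>2)) {c..e}"
    using integrable_continuous_interval[OF c3] by (simp add: integrable_integral)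
  have I4: "((\<lambda>y. 2 * v' y + 4 * (u' y)\<^sup>2) has_integral 2 * (v e - v c) + 4 * integral {c..e} (\<lambda>y. (u' y)\<^sup>2)) {c..e}"
    by (intro has_integral_add has_integral_mult_right I1 I2)
  have pt: "(u y)\<^sup>2 / (h - y)\<^sup>2 \<le> 2 * v' y + 4 * (u' y)\<^sup>2" if "y \<in> {c..e}" for y
  proof -
    have hy: "h - y > 0" using that eh by auto
    have "2 * v' y + 4 * (u' y)\<^sup>2 - (u y)\<^sup>2 / (h - y)\<^sup>2 = (u y / (h - y) + 2 * u' y)\<^sup>2"
    proof -
      have gen: "2 * (2*a*b/z + a\<^sup>2/z\<^sup>2) + 4*b\<^sup>2 - a\<^sup>2/z\<^sup>2 = (a/z + 2*b)\<^sup>2" if "z \<noteq> 0" for a b z :: real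
        using that by (simp add: power2_eq_square field_simps)
      show ?thesis unfolding v'_def using gen[of "h - y"] hy by simp
    qed
    then show ?thesis by (metis diff_ge_0_iff_ge zero_le_power2)
  qed
  have "integral {c..e} (\<lambda>y. (u y)\<^sup>2 / (h - y)\<^sup>2) \<le> 2 * (v e - v c) + 4 * integral {c..e} (\<lambda>y. (u' y)\<^sup>2)"
    by (rule has_integral_le[OF I3 I4 pt])
  moreover have "v c \<ge> 0" unfolding v_def using ce eh by auto
  ultimately show ?thesis unfolding v_def by (simp add: right_diff_distrib)
qed


lemma hardy_1d:
  fixes u u' :: "real \<Rightarrow> real"
  assumes ch: "c < h"
    and der: "\<And>y. c \<le> y \<Longrightarrow> y \<le> h \<Longrightarrow> (u has_real_derivative u' y) (at y)"
    and cont: "continuous_on {c..h} u'" and uh: "u h = 0"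
  shows "(\<integral>\<^sup>+y. indicator {c<..<h} y * ennreal ((u y)\<^sup>2 / (h - y)\<^sup>2) \<partial>lborel)
         \<le> 4 * (\<integral>\<^sup>+y. indicator {c<..<h} y * ennreal ((u' y)\<^sup>2) \<partial>lborel)"
proof -
  define F where "F y = (u y)\<^sup>2 / (h - y)\<^sup>2" for y
  define J where "J = (\<integral>\<^sup>+y. indicator {c<..<h} y * ennreal ((u' y)\<^sup>2) \<partial>lborel)"
  obtain M where M: "\<And>y. y \<in> {c..h} \<Longrightarrow> \<bar>u' y\<bar> \<le> M"
    using compact_imp_bounded[OF compact_continuous_image[OF cont compact_Icc]]
    unfolding bounded_iff by fastforce
  have M0: "M \<ge> 0" using M[of c] ch by auto
  define \<eta> where "\<eta> n = (h - c) / (real n + 3)" for n :: nat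
  define E where "E n = {c + \<eta> n .. h - \<eta> n}" for n
  have \<eta>pos: "\<eta> n > 0" for n using ch unfolding \<eta>_def by auto
  have \<eta>small: "3 * \<eta> n \<le> h - c" for n
    using ch unfolding \<eta>_def by (simp add: field_simps mult_right_mono)
  have \<eta>mono: "\<eta> (Suc n) \<le> \<eta> n" for n
    using ch unfolding \<eta>_def by (auto intro!: divide_left_mono)
  have Esub: "E n \<subseteq> {c<..<h}" for n using \<eta>pos[of n] unfolding E_def by auto
  have Fnn: "F y \<ge> 0" for y unfolding F_def by simp
  have In: "(\<integral>\<^sup>+y. indicator (E n) y * ennreal (F y) \<partial>lborel) \<le> ennreal (2 * M\<^sup>2 * \<eta> n) + 4 * J" for n
  proof -
    let ?c = "c + \<eta> n" and ?e = "h - \<eta> n"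
    have ce: "?c \<le> ?e" and eh: "?e < h" using \<eta>small[of n] \<eta>pos[of n] by auto
    have der': "\<And>y. ?c \<le> y \<Longrightarrow> y \<le> h \<Longrightarrow> (u has_real_derivative u' y) (at y)"
      using der \<eta>pos[of n] by auto
    have cont': "continuous_on {?c..h} u'"
      by (rule continuous_on_subset[OF cont]) (use \<eta>pos[of n] in auto)
    have seg: "integral {?c..?e} F \<le> 2 * ((u ?e)\<^sup>2 / (h - ?e)) + 4 * integral {?c..?e} (\<lambda>y. (u' y)\<^sup>2)"
      unfolding F_def by (rule hardy_seg[OF ce eh der' cont'])
    obtain z where z: "?e < z" "z < h" "u h - u ?e = (h - ?e) * u' z"
      using MVT2[OF eh, of u u'] der \<eta>small[of n] \<eta>pos[of n] by force
    have "\<bar>u ?e\<bar> \<le> \<eta> n * M"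
    proof -
      have zc: "z \<in> {c..h}" using z \<eta>small[of n] \<eta>pos[of n] by auto
      have ue: "u ?e = - (\<eta> n * u' z)" using z(3) uh by simp
      have "\<bar>u ?e\<bar> = \<eta> n * \<bar>u' z\<bar>" unfolding ue using \<eta>pos[of n] by (simp add: abs_mult)
      then show ?thesis using M[OF zc] \<eta>pos[of n] by (simp add: mult_left_mono)
    qed
    then have "(u ?e)\<^sup>2 \<le> (\<eta> n * M)\<^sup>2"
      by (metis abs_ge_zero order_trans power2_abs power_mono)
    then have bnd: "2 * ((u ?e)\<^sup>2 / (h - ?e)) \<le> 2 * M\<^sup>2 * \<eta> n"
      using \<eta>pos[of n] by (simp add: field_simps power2_eq_square)
    have contF: "continuous_on {?c..?e} F" unfolding F_def
      using eh by (intro continuous_intros continuous_at_imp_continuous_on) (auto intro!: DERIV_isCont der' simp: power2_eq_square)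
    have contu2: "continuous_on {?c..?e} (\<lambda>y. (u' y)\<^sup>2)"
      by (intro continuous_intros continuous_on_subset[OF cont]) (use \<eta>pos[of n] in auto)
    have e1: "(\<integral>\<^sup>+y. indicator (E n) y * ennreal (F y) \<partial>lborel) = ennreal (integral {?c..?e} F)"
    proof -
      have "(\<integral>\<^sup>+y. ennreal (indicator (E n) y * F y) \<partial>lborel) = integral {?c..?e} F"
        unfolding E_def
        by (rule nn_integral_has_integral_lebesgue) (use Fnn integrable_continuous_interval[OF contF] in auto)
      then show ?thesis by (simp add: ind_ennreal)
    qed
    have e2: "ennreal (integral {?c..?e} (\<lambda>y. (u' y)\<^sup>2)) = (\<integral>\<^sup>+y. indicator (E n) y * ennreal ((u' y)\<^sup>2) \<partial>lborel)"
    proof -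
      have "(\<integral>\<^sup>+y. ennreal (indicator (E n) y * (u' y)\<^sup>2) \<partial>lborel) = integral {?c..?e} (\<lambda>y. (u' y)\<^sup>2)"
        unfolding E_def
        by (rule nn_integral_has_integral_lebesgue) (use integrable_continuous_interval[OF contu2] in auto)
      moreover have "(\<lambda>y. indicator (E n) y * ennreal ((u' y)\<^sup>2)) = (\<lambda>y. ennreal (indicator (E n) y * (u' y)\<^sup>2))"
        by (auto simp: fun_eq_iff split: split_indicator)
      ultimately show ?thesis by simp
    qed
    have e3: "(\<integral>\<^sup>+y. indicator (E n) y * ennreal ((u' y)\<^sup>2) \<partial>lborel) \<le> J"
      unfolding J_def using Esub[of n]
      by (intro nn_integral_mono) (auto split: split_indicator)
    have i0: "integral {?c..?e} (\<lambda>y. (u' y)\<^sup>2) \<ge> 0"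
      by (rule integral_nonneg) (use integrable_continuous_interval[OF contu2] in auto)
    have Fb: "integral {?c..?e} F \<le> 2 * M\<^sup>2 * \<eta> n + 4 * integral {?c..?e} (\<lambda>y. (u' y)\<^sup>2)"
      using seg bnd by linarith
    then have "ennreal (integral {?c..?e} F) \<le> ennreal (2 * M\<^sup>2 * \<eta> n) + 4 * ennreal (integral {?c..?e} (\<lambda>y. (u' y)\<^sup>2))"
    proof -
      have "ennreal (2 * M\<^sup>2 * \<eta> n + 4 * integral {?c..?e} (\<lambda>y. (u' y)\<^sup>2)) = ennreal (2 * M\<^sup>2 * \<eta> n) + ennreal (4 * integral {?c..?e} (\<lambda>y. (u' y)\<^sup>2))"
        using i0 \<eta>pos[of n] by (intro ennreal_plus) auto
      also have "ennreal (4 * integral {?c..?e} (\<lambda>y. (u' y)\<^sup>2)) = 4 * ennreal (integral {?c..?e} (\<lambda>y. (u' y)\<^sup>2))"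
        using i0 by (simp add: ennreal_mult)
      finally show ?thesis using Fb by (metis ennreal_leI)
    qed
    also have "\<dots> \<le> ennreal (2 * M\<^sup>2 * \<eta> n) + 4 * J"
      using e2 e3 by (simp add: add_left_mono mult_left_mono)
    finally show ?thesis using e1 by simp
  qed
  have inc: "incseq (\<lambda>n y. indicator (E n) y * ennreal (F y))"
  proof (rule incseq_SucI, rule le_funI)
    fix n y
    have "E n \<subseteq> E (Suc n)" unfolding E_def using \<eta>mono[of n] by auto
    then show "indicator (E n) y * ennreal (F y) \<le> indicator (E (Suc n)) y * ennreal (F y)"
      by (auto split: split_indicator)
  qed
  have sup: "(SUP n. indicator (E n) y * ennreal (F y)) = indicator {c<..<h} y * ennreal (F y)" for y
  proof (cases "y \<in> {c<..<h}")
    case True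
    define \<delta> where "\<delta> = min (y - c) (h - y)"
    have \<delta>: "\<delta> > 0" using True unfolding \<delta>_def by auto
    obtain n :: nat where n: "real n > (h - c) / \<delta>" using reals_Archimedean2 by blast
    have "h - c < \<delta> * real n" using n \<delta> by (simp add: field_simps)
    then have "h - c < \<delta> * (real n + 3)" using \<delta> by (smt (verit) mult_left_mono of_nat_0_le_iff)
    then have "\<eta> n < \<delta>" unfolding \<eta>_def using \<delta> by (simp add: field_simps)
    then have yE: "y \<in> E n" unfolding E_def \<delta>_def by auto
    show ?thesis
    proof (rule antisym)
      show "(SUP n. indicator (E n) y * ennreal (F y)) \<le> indicator {c<..<h} y * ennreal (F y)"
        using True by (intro SUP_least) (auto split: split_indicator)
      show "indicator {c<..<h} y * ennreal (F y) \<le> (SUP n. indicator (E n) y * ennreal (F y))"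
        using True yE by (intro SUP_upper2[of n]) auto
    qed
  next
    case False
    then have "y \<notin> E n" for n using Esub by blast
    then show ?thesis using False by simp
  qed
  have meas: "(\<lambda>y. indicator (E n) y * ennreal (F y)) \<in> borel_measurable lborel" for n
  proof -
    have "(\<lambda>y. indicator (E n) y * ennreal (F y)) = (\<lambda>y. ennreal (indicator (E n) y * F y))"
      by (simp add: ind_ennreal)
    moreover have "(\<lambda>y. indicator (E n) y * F y) \<in> borel_measurable borel"
    proof -
      have "continuous_on (E n) F" unfolding F_def E_def using \<eta>pos[of n]
        by (intro continuous_intros continuous_at_imp_continuous_on) (auto intro!: DERIV_isCont der simp: power2_eq_square)
      then show ?thesis unfolding E_def
        using borel_measurable_continuous_on_indicator[of "{c + \<eta> n..h - \<eta> n}" F] by simp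
    qed
    ultimately show ?thesis by simp
  qed
  have "(\<integral>\<^sup>+y. indicator {c<..<h} y * ennreal (F y) \<partial>lborel) = (SUP n. \<integral>\<^sup>+y. indicator (E n) y * ennreal (F y) \<partial>lborel)"
    using nn_integral_monotone_convergence_SUP[OF inc meas] sup by simp
  also have "\<dots> \<le> 4 * J"
  proof (rule SUP_least)
    fix n
    let ?I = "\<lambda>n. \<integral>\<^sup>+y. indicator (E n) y * ennreal (F y) \<partial>lborel"
    have lim: "(\<lambda>m. ennreal (2 * M\<^sup>2 * \<eta> m) + 4 * J) \<longlonglongrightarrow> 0 + 4 * J"
    proof (intro tendsto_add tendsto_const)
      have "(\<lambda>m. 2 * M\<^sup>2 * \<eta> m) \<longlonglongrightarrow> 2 * M\<^sup>2 * 0"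
        unfolding \<eta>_def
      proof (intro tendsto_mult tendsto_const tendsto_divide_0[OF tendsto_const])
        show "filterlim (\<lambda>m. real m + 3) at_infinity sequentially"
          using filterlim_at_top_imp_at_infinity[OF filterlim_tendsto_add_at_top[OF tendsto_const[of 3] filterlim_real_sequentially]]
          by (simp add: add.commute)
      qed
      then show "(\<lambda>m. ennreal (2 * M\<^sup>2 * \<eta> m)) \<longlonglongrightarrow> 0"
        using tendsto_ennrealI by fastforce
    qed
    have "?I n \<le> ennreal (2 * M\<^sup>2 * \<eta> m) + 4 * J" if "m \<ge> n" for m
    proof -
      have "?I n \<le> ?I m"
        using inc that unfolding incseq_def by (intro nn_integral_mono) (auto simp: le_fun_def)
      then show ?thesis using In[of m] by simp
    qed
    then have "?I n \<le> 0 + 4 * J" by (intro LIMSEQ_le_const[OF lim]) auto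
    then show "?I n \<le> 4 * J" by simp
  qed
  finally show ?thesis unfolding F_def J_def .
qed




lemma abs_mul_le: "\<bar>x\<bar> \<le> X \<Longrightarrow> \<bar>y\<bar> \<le> Y \<Longrightarrow> \<bar>x * y\<bar> \<le> X * (Y::real)"
  by (simp add: abs_mult mult_mono')

lemma abs_add_le: "\<bar>x\<bar> \<le> X \<Longrightarrow> \<bar>y\<bar> \<le> Y \<Longrightarrow> \<bar>x + y\<bar> \<le> X + (Y::real)"
  by (metis abs_triangle_ineq add_mono order_trans)

lemma abs_sub_le: "\<bar>x\<bar> \<le> X \<Longrightarrow> \<bar>y\<bar> \<le> Y \<Longrightarrow> \<bar>x - y\<bar> \<le> X + (Y::real)"
  by (metis abs_triangle_ineq4 add_mono order_trans)

lemma div_inv: "p / (P::real) = p * inverse P" "p / P\<^sup>2 = p * inverse P * inverse P"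
  by (simp_all add: power2_eq_square divide_inverse)

lemma abs_m1: "\<bar>- 1 :: real\<bar> \<le> 1" "\<bar>1 :: real\<bar> \<le> 1" by simp_all

lemma bndL1:
  fixes P Q p' q' D D' \<epsilon> \<Phi> R \<beta> M1 M2 :: real
  assumes iP: "\<bar>inverse P\<bar> \<le> R" and iQ: "\<bar>inverse Q\<bar> \<le> R" and p': "\<bar>p'\<bar> \<le> \<beta>" and q': "\<bar>q'\<bar> \<le> \<beta>"
    and b1: "1 \<le> \<beta>"
    and D: "\<bar>D\<bar> \<le> M1" and D': "\<bar>D'\<bar> \<le> M2" and e: "0 \<le> \<epsilon>" "\<epsilon> \<le> 1" and \<Phi>: "0 \<le> \<Phi>"
  shows "\<bar>\<Phi> * \<epsilon> * (D' * \<epsilon> * (p' / P - q' / Q) * (- 1 / P - 1 / Q) + D * (p' / P\<^sup>2 + q' / Q\<^sup>2))\<bar>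
    \<le> \<Phi> * (4 * \<beta> * M2 + 2 * \<beta> * M1) * R\<^sup>2"
proof -
  have X: "\<bar>p' / P - q' / Q\<bar> \<le> \<beta> * R + \<beta> * R"
    unfolding div_inv(2) unfolding div_inv(1) by (intro abs_sub_le abs_mul_le p' q' iP iQ)
  have Y: "\<bar>- 1 / P - 1 / Q\<bar> \<le> 1 * R + 1 * R"
    unfolding div_inv(2) unfolding div_inv(1) by (intro abs_sub_le abs_mul_le abs_m1 iP iQ)
  have Z: "\<bar>p' / P\<^sup>2 + q' / Q\<^sup>2\<bar> \<le> \<beta> * R * R + \<beta> * R * R"
    unfolding div_inv(2) unfolding div_inv(1) by (intro abs_add_le abs_mul_le p' q' iP iQ)
  have ee: "\<bar>\<epsilon>\<bar> \<le> 1" using e by simp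
  have T: "\<bar>D' * \<epsilon> * (p' / P - q' / Q) * (- 1 / P - 1 / Q) + D * (p' / P\<^sup>2 + q' / Q\<^sup>2)\<bar>
     \<le> M2 * 1 * (\<beta> * R + \<beta> * R) * (1 * R + 1 * R) + M1 * (\<beta> * R * R + \<beta> * R * R)"
    by (rule abs_add_le; rule abs_mul_le[OF abs_mul_le[OF abs_mul_le[OF D' ee] X] Y] abs_mul_le[OF D Z])
  have "\<bar>\<Phi> * \<epsilon> * (D' * \<epsilon> * (p' / P - q' / Q) * (- 1 / P - 1 / Q) + D * (p' / P\<^sup>2 + q' / Q\<^sup>2))\<bar>
     \<le> \<Phi> * 1 * (M2 * 1 * (\<beta> * R + \<beta> * R) * (1 * R + 1 * R) + M1 * (\<beta> * R * R + \<beta> * R * R))"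
    by (rule abs_mul_le[OF abs_mul_le[OF _ ee] T]) (use \<Phi> in simp)
  also have "\<dots> = \<Phi> * (4 * \<beta> * M2 + 2 * \<beta> * M1) * R\<^sup>2" by (simp add: power2_eq_square algebra_simps)
  finally show ?thesis .
qed

lemma bndL2:
  fixes P Q p' q' c e c' e' D D' \<epsilon> \<Phi> R \<beta> \<Gamma> M1 M2 :: real
  assumes iP: "\<bar>inverse P\<bar> \<le> R" and iQ: "\<bar>inverse Q\<bar> \<le> R" and p': "\<bar>p'\<bar> \<le> \<beta>" and q': "\<bar>q'\<bar> \<le> \<beta>"
    and c: "\<bar>c\<bar> \<le> \<beta>" and e: "\<bar>e\<bar> \<le> \<beta>" and c': "\<bar>c'\<bar> \<le> \<Gamma> * R" and e': "\<bar>e'\<bar> \<le> \<Gamma> * R"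
    and D: "\<bar>D\<bar> \<le> M1" and D': "\<bar>D'\<bar> \<le> M2" and ep: "0 \<le> \<epsilon>" "\<epsilon> \<le> 1" and \<Phi>: "0 \<le> \<Phi>"
  shows "\<bar>- (\<Phi> * \<epsilon> * (D' * \<epsilon> * (p' / P - q' / Q) * (c / P + e / Q)
       + D * (c' / P - c * p' / P\<^sup>2 + e' / Q - e * q' / Q\<^sup>2)))\<bar>
    \<le> \<Phi> * (4 * \<beta>\<^sup>2 * M2 + M1 * (2 * \<Gamma> + 2 * \<beta>\<^sup>2)) * R\<^sup>2"
proof -
  have X: "\<bar>p' / P - q' / Q\<bar> \<le> \<beta> * R + \<beta> * R"
    unfolding div_inv(2) unfolding div_inv(1) by (intro abs_sub_le abs_mul_le p' q' iP iQ)
  have Y: "\<bar>c / P + e / Q\<bar> \<le> \<beta> * R + \<beta> * R"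
    unfolding div_inv(2) unfolding div_inv(1) by (intro abs_add_le abs_mul_le c e iP iQ)
  have Z: "\<bar>c' / P - c * p' / P\<^sup>2 + e' / Q - e * q' / Q\<^sup>2\<bar> \<le> \<Gamma> * R * R + \<beta> * \<beta> * R * R + \<Gamma> * R * R + \<beta> * \<beta> * R * R"
    unfolding div_inv(2) unfolding div_inv(1) by (intro abs_add_le abs_sub_le abs_mul_le c e c' e' p' q' iP iQ)
  have ee: "\<bar>\<epsilon>\<bar> \<le> 1" using ep by simp
  have T: "\<bar>D' * \<epsilon> * (p' / P - q' / Q) * (c / P + e / Q) + D * (c' / P - c * p' / P\<^sup>2 + e' / Q - e * q' / Q\<^sup>2)\<bar>
     \<le> M2 * 1 * (\<beta> * R + \<beta> * R) * (\<beta> * R + \<beta> * R) + M1 * (\<Gamma> * R * R + \<beta> * \<beta> * R * R + \<Gamma> * R * R + \<beta> * \<beta> * R * R)"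
    by (rule abs_add_le; rule abs_mul_le[OF abs_mul_le[OF abs_mul_le[OF D' ee] X] Y] abs_mul_le[OF D Z])
  have "\<bar>\<Phi> * \<epsilon> * (D' * \<epsilon> * (p' / P - q' / Q) * (c / P + e / Q) + D * (c' / P - c * p' / P\<^sup>2 + e' / Q - e * q' / Q\<^sup>2))\<bar>
     \<le> \<Phi> * 1 * (M2 * 1 * (\<beta> * R + \<beta> * R) * (\<beta> * R + \<beta> * R) + M1 * (\<Gamma> * R * R + \<beta> * \<beta> * R * R + \<Gamma> * R * R + \<beta> * \<beta> * R * R))"
    by (rule abs_mul_le[OF abs_mul_le[OF _ ee] T]) (use \<Phi> in simp)
  also have "\<dots> = \<Phi> * (4 * \<beta>\<^sup>2 * M2 + M1 * (2 * \<Gamma> + 2 * \<beta>\<^sup>2)) * R\<^sup>2" by (simp add: power2_eq_square algebra_simps)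
  finally show ?thesis by simp
qed

lemma bndG1:
  fixes P Q D \<epsilon> \<Phi> R M1 :: real
  assumes iP: "\<bar>inverse P\<bar> \<le> R" and iQ: "\<bar>inverse Q\<bar> \<le> R" and D: "\<bar>D\<bar> \<le> M1" and ep: "0 \<le> \<epsilon>" "\<epsilon> \<le> 1" and \<Phi>: "0 \<le> \<Phi>"
  shows "\<bar>\<Phi> * \<epsilon> * D * (- 1 / P - 1 / Q)\<bar> \<le> \<Phi> * (2 * M1) * R"
proof -
  have Y: "\<bar>- 1 / P - 1 / Q\<bar> \<le> 1 * R + 1 * R"
    unfolding div_inv(2) unfolding div_inv(1) by (intro abs_sub_le abs_mul_le abs_m1 iP iQ)
  have ee: "\<bar>\<epsilon>\<bar> \<le> 1" using ep by simp
  have "\<bar>\<Phi> * \<epsilon> * D * (- 1 / P - 1 / Q)\<bar> \<le> \<Phi> * 1 * M1 * (1 * R + 1 * R)"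
    by (rule abs_mul_le[OF abs_mul_le[OF abs_mul_le[OF _ ee] D] Y]) (use \<Phi> in simp)
  also have "\<Phi> * 1 * M1 * (1 * R + 1 * R) = \<Phi> * (2 * M1) * R" by (simp add: algebra_simps)
  finally show ?thesis .
qed

lemma bndG2:
  fixes P Q c e D \<epsilon> \<Phi> R \<beta> M1 :: real
  assumes iP: "\<bar>inverse P\<bar> \<le> R" and iQ: "\<bar>inverse Q\<bar> \<le> R" and c: "\<bar>c\<bar> \<le> \<beta>" and e: "\<bar>e\<bar> \<le> \<beta>"
    and D: "\<bar>D\<bar> \<le> M1" and ep: "0 \<le> \<epsilon>" "\<epsilon> \<le> 1" and \<Phi>: "0 \<le> \<Phi>"
  shows "\<bar>- (\<Phi> * \<epsilon> * D * (c / P + e / Q))\<bar> \<le> \<Phi> * (2 * \<beta> * M1) * R"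
proof -
  have Y: "\<bar>c / P + e / Q\<bar> \<le> \<beta> * R + \<beta> * R"
    unfolding div_inv(2) unfolding div_inv(1) by (intro abs_add_le abs_mul_le c e iP iQ)
  have ee: "\<bar>\<epsilon>\<bar> \<le> 1" using ep by simp
  have "\<bar>\<Phi> * \<epsilon> * D * (c / P + e / Q)\<bar> \<le> \<Phi> * 1 * M1 * (\<beta> * R + \<beta> * R)"
    by (rule abs_mul_le[OF abs_mul_le[OF abs_mul_le[OF _ ee] D] Y]) (use \<Phi> in simp)
  also have "\<Phi> * 1 * M1 * (\<beta> * R + \<beta> * R) = \<Phi> * (2 * \<beta> * M1) * R" by (simp add: algebra_simps)
  finally show ?thesis by simp
qed




locale chan =
  fixes f1 f2 \<mu> :: "real \<Rightarrow> real"
  assumes f1_smooth: "smooth_fun f1" and f2_smooth: "smooth_fun f2"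
    and d_pos: "\<exists>d>0. \<forall>t. d \<le> f2 t - f1 t"
    and beta_fin: "bounded (range (deriv f1))" "bounded (range (deriv f2))"
    and mu_smooth: "smooth_fun \<mu>"
    and mu_1: "\<forall>t\<ge>1. \<mu> t = 0" and mu_0: "\<forall>t\<le>0. \<mu> t = 1"
begin

lemma smooth_D:
  assumes "smooth_fun h"
  shows "\<And>t. (h has_real_derivative deriv h t) (at t)"
    "\<And>t. (deriv h has_real_derivative deriv (deriv h) t) (at t)"
    "\<And>t. (deriv (deriv h) has_real_derivative deriv (deriv (deriv h)) t) (at t)"
proof -
  fix t
  have "((deriv ^^ 0) h) differentiable (at t)" "((deriv ^^ 1) h) differentiable (at t)"
    "((deriv ^^ 2) h) differentiable (at t)"
    using assms unfolding smooth_fun_def by blast+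
  then have "h differentiable (at t)" "deriv h differentiable (at t)" "deriv (deriv h) differentiable (at t)"
    by (simp_all add: numeral_2_eq_2)
  then show "(h has_real_derivative deriv h t) (at t)"
    "(deriv h has_real_derivative deriv (deriv h) t) (at t)"
    "(deriv (deriv h) has_real_derivative deriv (deriv (deriv h)) t) (at t)"
    by (simp_all add: DERIV_deriv_iff_real_differentiable)
qed

lemmas f1D = smooth_D[OF f1_smooth] and f2D = smooth_D[OF f2_smooth] and muD = smooth_D[OF mu_smooth]

lemma chain_rules[derivative_intros]:
  "(g has_real_derivative g') (at x within S) \<Longrightarrow> ((\<lambda>x. f1 (g x)) has_real_derivative deriv f1 (g x) * g') (at x within S)"
  "(g has_real_derivative g') (at x within S) \<Longrightarrow> ((\<lambda>x. f2 (g x)) has_real_derivative deriv f2 (g x) * g') (at x within S)"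
  "(g has_real_derivative g') (at x within S) \<Longrightarrow> ((\<lambda>x. deriv f1 (g x)) has_real_derivative deriv (deriv f1) (g x) * g') (at x within S)"
  "(g has_real_derivative g') (at x within S) \<Longrightarrow> ((\<lambda>x. deriv f2 (g x)) has_real_derivative deriv (deriv f2) (g x) * g') (at x within S)"
  "(g has_real_derivative g') (at x within S) \<Longrightarrow> ((\<lambda>x. \<mu> (g x)) has_real_derivative deriv \<mu> (g x) * g') (at x within S)"
  "(g has_real_derivative g') (at x within S) \<Longrightarrow> ((\<lambda>x. deriv \<mu> (g x)) has_real_derivative deriv (deriv \<mu>) (g x) * g') (at x within S)"
  by (erule DERIV_chain2[OF f1D(1)] DERIV_chain2[OF f2D(1)] DERIV_chain2[OF f1D(2)]
      DERIV_chain2[OF f2D(2)] DERIV_chain2[OF muD(1)] DERIV_chain2[OF muD(2)])+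

lemma cont_fs: "continuous_on UNIV f1" "continuous_on UNIV f2"
  "continuous_on UNIV (deriv f1)" "continuous_on UNIV (deriv f2)"
  "continuous_on UNIV (deriv \<mu>)" "continuous_on UNIV (deriv (deriv \<mu>))"
  by (auto intro!: continuous_at_imp_continuous_on DERIV_isCont f1D f2D muD)

lemma mu_supp:
  assumes "s < 0 \<or> s > 1"
  shows "deriv \<mu> s = 0" "deriv (deriv \<mu>) s = 0"
proof -
  have A: "deriv \<mu> s = 0" if "s \<in> S" "open S" "\<forall>x\<in>S. \<mu> x = c" for s S c
    by (rule DERIV_imp_deriv, rule has_field_derivative_transform_within_open[OF DERIV_const[of c] that(2,1)])
       (use that in auto)
  have B: "deriv (deriv \<mu>) s = 0" if "s \<in> S" "open S" "\<forall>x\<in>S. \<mu> x = c" for s S c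
    by (rule DERIV_imp_deriv, rule has_field_derivative_transform_within_open[OF DERIV_const[of 0] that(2,1)])
       (use A that in auto)
  show "deriv \<mu> s = 0" "deriv (deriv \<mu>) s = 0"
  proof -
    consider "s \<in> {..<0}" | "s \<in> {1<..}" using assms by auto
    then have "deriv \<mu> s = 0 \<and> deriv (deriv \<mu>) s = 0"
    proof cases
      case 1 then show ?thesis using A[OF 1, of 1] B[OF 1, of 1] mu_0 by auto
    next
      case 2 then show ?thesis using A[OF 2, of 0] B[OF 2, of 0] mu_1 by auto
    qed
    then show "deriv \<mu> s = 0" "deriv (deriv \<mu>) s = 0" by auto
  qed
qed

lemma mu_bounds: "\<exists>M1 M2. M1 \<ge> 0 \<and> M2 \<ge> 0 \<and> (\<forall>s. \<bar>deriv \<mu> s\<bar> \<le> M1 \<and> \<bar>deriv (deriv \<mu>) s\<bar> \<le> M2)"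
proof -
  obtain M1 where M1: "\<And>s. s \<in> {0..1} \<Longrightarrow> \<bar>deriv \<mu> s\<bar> \<le> M1"
    using compact_imp_bounded[OF compact_continuous_image[OF continuous_on_subset[OF cont_fs(5)] compact_Icc, of 0 1]]
    unfolding bounded_iff by fastforce
  obtain M2 where M2: "\<And>s. s \<in> {0..1} \<Longrightarrow> \<bar>deriv (deriv \<mu>) s\<bar> \<le> M2"
    using compact_imp_bounded[OF compact_continuous_image[OF continuous_on_subset[OF cont_fs(6)] compact_Icc, of 0 1]]
    unfolding bounded_iff by fastforce
  have "M1 \<ge> 0" "M2 \<ge> 0" using M1[of 0] M2[of 0] by auto
  moreover have "\<bar>deriv \<mu> s\<bar> \<le> M1 \<and> \<bar>deriv (deriv \<mu>) s\<bar> \<le> M2" for s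
    using M1[of s] M2[of s] mu_supp[of s] \<open>M1 \<ge> 0\<close> \<open>M2 \<ge> 0\<close> by (cases "s < 0 \<or> s > 1") auto
  ultimately show ?thesis by blast
qed

lemma beta_bound: "\<exists>\<beta>\<ge>0. \<forall>t. \<bar>deriv f1 t\<bar> \<le> \<beta> \<and> \<bar>deriv f2 t\<bar> \<le> \<beta>"
proof -
  obtain b1 where b1: "\<And>t. \<bar>deriv f1 t\<bar> \<le> b1" using beta_fin(1) unfolding bounded_iff by auto
  obtain b2 where b2: "\<And>t. \<bar>deriv f2 t\<bar> \<le> b2" using beta_fin(2) unfolding bounded_iff by auto
  show ?thesis using b1 b2 by (intro exI[of _ "max b1 b2"]) (auto intro: order_trans[OF _ max.cobounded1] order_trans[OF _ max.cobounded2] order_trans[OF abs_ge_zero b1])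
qed


lemma cont_comp[continuous_intros]:
  "continuous_on S g \<Longrightarrow> continuous_on S (\<lambda>x. f1 (g x))"
  "continuous_on S g \<Longrightarrow> continuous_on S (\<lambda>x. f2 (g x))"
  "continuous_on S g \<Longrightarrow> continuous_on S (\<lambda>x. deriv f1 (g x))"
  "continuous_on S g \<Longrightarrow> continuous_on S (\<lambda>x. deriv f2 (g x))"
  by (auto intro: continuous_on_compose2[OF cont_fs(1)] continuous_on_compose2[OF cont_fs(2)]
      continuous_on_compose2[OF cont_fs(3)] continuous_on_compose2[OF cont_fs(4)])

definition "pp x = f2 (fst x) - snd x"
definition "qq x = snd x - (f1 (fst x) + f2 (fst x)) / 2"
definition "ss \<epsilon> x = 1 + \<epsilon> * (ln (pp x) - ln (qq x))"
definition "AA x = - 1 / pp x - 1 / qq x"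
definition "fbd t = (deriv f1 t + deriv f2 t) / 2"
definition "fbdd t = (deriv (deriv f1) t + deriv (deriv f2) t) / 2"
definition "BB x = deriv f2 (fst x) / pp x + fbd (fst x) / qq x"
definition "g1e \<epsilon> \<Phi> x = \<Phi> * \<epsilon> * deriv \<mu> (ss \<epsilon> x) * AA x"
definition "g2e \<epsilon> \<Phi> x = - (\<Phi> * \<epsilon> * deriv \<mu> (ss \<epsilon> x) * BB x)"
definition "W0 = {x. qq x < pp x}"
definition "W1 = {x. 0 < qq x \<and> 0 < pp x}"

lemma open_W: "open W0" "open W1"
  unfolding W0_def W1_def pp_def qq_def
  by (auto intro!: open_Collect_less open_Collect_conj continuous_intros)

lemma slice_open:
  assumes "open W" shows "open {t. (a, t) \<in> W}" "open {t. (t, a) \<in> W}"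
proof -
  have "{t. (a, t) \<in> W} = (\<lambda>t. (a, t)) -` W" "{t. (t, a) \<in> W} = (\<lambda>t. (t, a)) -` W" by auto
  then show "open {t. (a, t) \<in> W}" "open {t. (t, a) \<in> W}"
    using assms by (auto intro!: continuous_open_vimage continuous_intros)
qed

lemma G_W0: assumes "0 < \<epsilon>" "x \<in> W0" shows "fluxG f1 f2 \<mu> \<epsilon> \<Phi> x = 0"
proof (cases "qq x > 0")
  case True
  then have "pp x / qq x > 1" using assms unfolding W0_def by auto
  then have "ln (pp x / qq x) > 0" by simp
  then have "1 + \<epsilon> * ln (pp x / qq x) \<ge> 1" using assms by (simp add: less_imp_le)
  then show ?thesis using mu_1 True unfolding fluxG_def pp_def qq_def Let_def by auto
next
  case False
  then show ?thesis unfolding fluxG_def qq_def Let_def by auto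
qed

lemma G_W1: assumes "x \<in> W1" shows "fluxG f1 f2 \<mu> \<epsilon> \<Phi> x = \<Phi> * \<mu> (ss \<epsilon> x)"
proof -
  have "snd x > (f1 (fst x) + f2 (fst x)) / 2" using assms unfolding W1_def qq_def by auto
  moreover have "ln ((f2 (fst x) - snd x) / (snd x - (f1 (fst x) + f2 (fst x)) / 2)) = ln (pp x) - ln (qq x)"
    using assms unfolding W1_def pp_def qq_def by (simp add: ln_div)
  ultimately show ?thesis unfolding fluxG_def ss_def Let_def by simp
qed

lemma Omega_W: "Omega f1 f2 \<subseteq> W0 \<union> W1"
proof
  fix x assume "x \<in> Omega f1 f2"
  then have "f1 (fst x) < snd x" "snd x < f2 (fst x)" unfolding Omega_def by auto
  then have "pp x > 0" unfolding pp_def by auto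
  then show "x \<in> W0 \<union> W1" unfolding W0_def W1_def by (cases "qq x > 0") auto
qed

lemma dG_y: assumes "x \<in> W1"
  shows "((\<lambda>t. \<Phi> * \<mu> (ss \<epsilon> (fst x, t))) has_real_derivative g1e \<epsilon> \<Phi> x) (at (snd x))"
  using assms unfolding g1e_def ss_def pp_def qq_def AA_def W1_def
  by (auto intro!: derivative_eq_intros)

lemma dG_x: assumes "x \<in> W1"
  shows "((\<lambda>t. \<Phi> * \<mu> (ss \<epsilon> (t, snd x))) has_real_derivative - g2e \<epsilon> \<Phi> x) (at (fst x))"
proof -
  obtain a b where x: "x = (a, b)" by (cases x)
  have "((\<lambda>t. \<Phi> * \<mu> (1 + \<epsilon> * (ln (f2 t - b) - ln (b - (f1 t + f2 t) / 2)))) has_real_derivative - g2e \<epsilon> \<Phi> (a, b)) (at a)"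
    using assms unfolding x g2e_def ss_def pp_def qq_def BB_def fbd_def W1_def
    by (auto intro!: derivative_eq_intros) (auto simp: field_simps)
  then show ?thesis unfolding x ss_def pp_def qq_def by simp
qed

lemma fg_W0: assumes "0 < \<epsilon>" "x \<in> W0"
  shows "flux_g1 f1 f2 \<mu> \<epsilon> \<Phi> x = 0" "flux_g2 f1 f2 \<mu> \<epsilon> \<Phi> x = 0"
proof -
  have "((\<lambda>t. fluxG f1 f2 \<mu> \<epsilon> \<Phi> (fst x, t)) has_real_derivative 0) (at (snd x))"
    by (rule has_field_derivative_transform_within_open[OF DERIV_const slice_open(1)[OF open_W(1), of "fst x"]])
       (use assms G_W0 in auto)
  then show "flux_g1 f1 f2 \<mu> \<epsilon> \<Phi> x = 0" unfolding flux_g1_def by (rule DERIV_imp_deriv)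
  have "((\<lambda>t. fluxG f1 f2 \<mu> \<epsilon> \<Phi> (t, snd x)) has_real_derivative 0) (at (fst x))"
    by (rule has_field_derivative_transform_within_open[OF DERIV_const slice_open(2)[OF open_W(1), of "snd x"]])
       (use assms G_W0 in auto)
  then show "flux_g2 f1 f2 \<mu> \<epsilon> \<Phi> x = 0" unfolding flux_g2_def using DERIV_imp_deriv by force
qed

lemma fg_W1: assumes "x \<in> W1"
  shows "flux_g1 f1 f2 \<mu> \<epsilon> \<Phi> x = g1e \<epsilon> \<Phi> x" "flux_g2 f1 f2 \<mu> \<epsilon> \<Phi> x = g2e \<epsilon> \<Phi> x"
proof -
  have "((\<lambda>t. fluxG f1 f2 \<mu> \<epsilon> \<Phi> (fst x, t)) has_real_derivative g1e \<epsilon> \<Phi> x) (at (snd x))"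
    by (rule has_field_derivative_transform_within_open[OF dG_y[OF assms] slice_open(1)[OF open_W(2), of "fst x"]])
       (use assms G_W1 in auto)
  then show "flux_g1 f1 f2 \<mu> \<epsilon> \<Phi> x = g1e \<epsilon> \<Phi> x" unfolding flux_g1_def by (rule DERIV_imp_deriv)
  have "((\<lambda>t. fluxG f1 f2 \<mu> \<epsilon> \<Phi> (t, snd x)) has_real_derivative - g2e \<epsilon> \<Phi> x) (at (fst x))"
    by (rule has_field_derivative_transform_within_open[OF dG_x[OF assms] slice_open(2)[OF open_W(2), of "snd x"]])
       (use assms G_W1 in auto)
  then show "flux_g2 f1 f2 \<mu> \<epsilon> \<Phi> x = g2e \<epsilon> \<Phi> x" unfolding flux_g2_def using DERIV_imp_deriv by force
qed


definition "D1 \<epsilon> x = deriv \<mu> (ss \<epsilon> x)"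
definition "D2 \<epsilon> x = deriv (deriv \<mu>) (ss \<epsilon> x)"

lemma genL1:
  assumes dp: "(p has_real_derivative p') (at a)" and dq: "(q has_real_derivative q') (at a)"
    and pos: "p a > 0" "q a > 0"
    and dD: "\<And>y. (D has_real_derivative D' y) (at y)"
  shows "((\<lambda>t. \<Phi> * \<epsilon> * D (1 + \<epsilon> * (ln (p t) - ln (q t))) * (- 1 / p t - 1 / q t)) has_real_derivative
     \<Phi> * \<epsilon> * (D' (1 + \<epsilon> * (ln (p a) - ln (q a))) * \<epsilon> * (p' / p a - q' / q a) * (- 1 / p a - 1 / q a)
       + D (1 + \<epsilon> * (ln (p a) - ln (q a))) * (p' / (p a)\<^sup>2 + q' / (q a)\<^sup>2))) (at a)"
proof -
  define s where "s = 1 + \<epsilon> * (ln (p a) - ln (q a))"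
  have ds: "((\<lambda>t. 1 + \<epsilon> * (ln (p t) - ln (q t))) has_real_derivative \<epsilon> * (p' / p a - q' / q a)) (at a)"
    using pos by (auto intro!: derivative_eq_intros dp dq simp: field_simps)
  have dDs: "((\<lambda>t. D (1 + \<epsilon> * (ln (p t) - ln (q t)))) has_real_derivative D' s * (\<epsilon> * (p' / p a - q' / q a))) (at a)"
    unfolding s_def by (rule DERIV_chain2[OF dD ds])
  have dA: "((\<lambda>t. - 1 / p t - 1 / q t) has_real_derivative p' / (p a)\<^sup>2 + q' / (q a)\<^sup>2) (at a)"
    using pos by (auto intro!: derivative_eq_intros dp dq simp: field_simps power2_eq_square)
  have "((\<lambda>t. \<Phi> * \<epsilon> * (D (1 + \<epsilon> * (ln (p t) - ln (q t))) * (- 1 / p t - 1 / q t))) has_real_derivative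
     \<Phi> * \<epsilon> * (D' s * (\<epsilon> * (p' / p a - q' / q a)) * (- 1 / p a - 1 / q a) + D s * (p' / (p a)\<^sup>2 + q' / (q a)\<^sup>2))) (at a)"
    by (rule DERIV_cong[OF DERIV_cmult[OF DERIV_mult[OF dDs dA], of "\<Phi> * \<epsilon>"]]) (simp add: algebra_simps s_def)
  then show ?thesis unfolding s_def by (simp add: mult.assoc)
qed

lemma genL2:
  assumes dp: "(p has_real_derivative p') (at a)" and dq: "(q has_real_derivative q') (at a)"
    and dc: "(c has_real_derivative c') (at a)" and de: "(e has_real_derivative e') (at a)"
    and pos: "p a > 0" "q a > 0"
    and dD: "\<And>y. (D has_real_derivative D' y) (at y)"
  shows "((\<lambda>t. - (\<Phi> * \<epsilon> * D (1 + \<epsilon> * (ln (p t) - ln (q t))) * (c t / p t + e t / q t))) has_real_derivative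
     - (\<Phi> * \<epsilon> * (D' (1 + \<epsilon> * (ln (p a) - ln (q a))) * \<epsilon> * (p' / p a - q' / q a) * (c a / p a + e a / q a)
       + D (1 + \<epsilon> * (ln (p a) - ln (q a))) * (c' / p a - c a * p' / (p a)\<^sup>2 + e' / q a - e a * q' / (q a)\<^sup>2)))) (at a)"
proof -
  define s where "s = 1 + \<epsilon> * (ln (p a) - ln (q a))"
  have ds: "((\<lambda>t. 1 + \<epsilon> * (ln (p t) - ln (q t))) has_real_derivative \<epsilon> * (p' / p a - q' / q a)) (at a)"
    using pos by (auto intro!: derivative_eq_intros dp dq simp: field_simps)
  have dDs: "((\<lambda>t. D (1 + \<epsilon> * (ln (p t) - ln (q t)))) has_real_derivative D' s * (\<epsilon> * (p' / p a - q' / q a))) (at a)"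
    unfolding s_def by (rule DERIV_chain2[OF dD ds])
  have dB: "((\<lambda>t. c t / p t + e t / q t) has_real_derivative c' / p a - c a * p' / (p a)\<^sup>2 + e' / q a - e a * q' / (q a)\<^sup>2) (at a)"
    using pos by (auto intro!: derivative_eq_intros dp dq dc de simp: field_simps power2_eq_square)
  have "((\<lambda>t. - (\<Phi> * \<epsilon> * (D (1 + \<epsilon> * (ln (p t) - ln (q t))) * (c t / p t + e t / q t)))) has_real_derivative
     - (\<Phi> * \<epsilon> * (D' s * (\<epsilon> * (p' / p a - q' / q a)) * (c a / p a + e a / q a) + D s * (c' / p a - c a * p' / (p a)\<^sup>2 + e' / q a - e a * q' / (q a)\<^sup>2)))) (at a)"
    by (rule DERIV_cong[OF DERIV_minus[OF DERIV_cmult[OF DERIV_mult[OF dDs dB], of "\<Phi> * \<epsilon>"]]]) (simp add: algebra_simps s_def)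
  then show ?thesis unfolding s_def by (simp add: mult.assoc)
qed


lemma dq_x: "((\<lambda>t. b - (f1 t + f2 t) / 2) has_real_derivative - fbd a) (at a)"
  unfolding fbd_def by (auto intro!: derivative_eq_intros)

lemma pd_W1:
  fixes \<epsilon> \<Phi> :: real
  assumes W: "(a, b) \<in> W1"
  defines "P \<equiv> pp (a, b)" and "Q \<equiv> qq (a, b)" and "s \<equiv> ss \<epsilon> (a, b)"
  shows "pd1 (flux_g1 f1 f2 \<mu> \<epsilon> \<Phi>) (a, b) = \<Phi> * \<epsilon> * (deriv (deriv \<mu>) s * \<epsilon> * (deriv f2 a / P - (- fbd a) / Q) * (- 1 / P - 1 / Q)
       + deriv \<mu> s * (deriv f2 a / P\<^sup>2 + (- fbd a) / Q\<^sup>2))" (is ?A)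
    and "pd2 (flux_g1 f1 f2 \<mu> \<epsilon> \<Phi>) (a, b) = \<Phi> * \<epsilon> * (deriv (deriv \<mu>) s * \<epsilon> * ((- 1) / P - 1 / Q) * (- 1 / P - 1 / Q)
       + deriv \<mu> s * ((- 1) / P\<^sup>2 + 1 / Q\<^sup>2))" (is ?B)
    and "pd1 (flux_g2 f1 f2 \<mu> \<epsilon> \<Phi>) (a, b) = - (\<Phi> * \<epsilon> * (deriv (deriv \<mu>) s * \<epsilon> * (deriv f2 a / P - (- fbd a) / Q) * (deriv f2 a / P + fbd a / Q)
       + deriv \<mu> s * (deriv (deriv f2) a / P - deriv f2 a * deriv f2 a / P\<^sup>2 + fbdd a / Q - fbd a * (- fbd a) / Q\<^sup>2)))" (is ?C)
    and "pd2 (flux_g2 f1 f2 \<mu> \<epsilon> \<Phi>) (a, b) = - (\<Phi> * \<epsilon> * (deriv (deriv \<mu>) s * \<epsilon> * ((- 1) / P - 1 / Q) * (deriv f2 a / P + fbd a / Q)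
       + deriv \<mu> s * (0 / P - deriv f2 a * (- 1) / P\<^sup>2 + 0 / Q - fbd a * 1 / Q\<^sup>2)))" (is ?D)
proof -
  have pos: "f2 a - b > 0" "b - (f1 a + f2 a) / 2 > 0" using W unfolding W1_def pp_def qq_def by auto
  have opx: "open {t. (t, b) \<in> W1}" and opy: "open {t. (a, t) \<in> W1}" using slice_open open_W by auto
  have fx1: "\<And>t. t \<in> {t. (t, b) \<in> W1} \<Longrightarrow> g1e \<epsilon> \<Phi> (t, b) = flux_g1 f1 f2 \<mu> \<epsilon> \<Phi> (t, b)"
    and fx2: "\<And>t. t \<in> {t. (t, b) \<in> W1} \<Longrightarrow> g2e \<epsilon> \<Phi> (t, b) = flux_g2 f1 f2 \<mu> \<epsilon> \<Phi> (t, b)"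
    and fy1: "\<And>t. t \<in> {t. (a, t) \<in> W1} \<Longrightarrow> g1e \<epsilon> \<Phi> (a, t) = flux_g1 f1 f2 \<mu> \<epsilon> \<Phi> (a, t)"
    and fy2: "\<And>t. t \<in> {t. (a, t) \<in> W1} \<Longrightarrow> g2e \<epsilon> \<Phi> (a, t) = flux_g2 f1 f2 \<mu> \<epsilon> \<Phi> (a, t)"
    using fg_W1 by auto
  have aW: "a \<in> {t. (t, b) \<in> W1}" "b \<in> {t. (a, t) \<in> W1}" using W by auto
  have e1: "g1e \<epsilon> \<Phi> (t, b) = \<Phi> * \<epsilon> * deriv \<mu> (1 + \<epsilon> * (ln (f2 t - b) - ln (b - (f1 t + f2 t) / 2))) * (- 1 / (f2 t - b) - 1 / (b - (f1 t + f2 t) / 2))" for t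
    by (simp add: g1e_def ss_def AA_def pp_def qq_def)
  have e2: "g1e \<epsilon> \<Phi> (a, t) = \<Phi> * \<epsilon> * deriv \<mu> (1 + \<epsilon> * (ln (f2 a - t) - ln (t - (f1 a + f2 a) / 2))) * (- 1 / (f2 a - t) - 1 / (t - (f1 a + f2 a) / 2))" for t
    by (simp add: g1e_def ss_def AA_def pp_def qq_def)
  have e3: "g2e \<epsilon> \<Phi> (t, b) = - (\<Phi> * \<epsilon> * deriv \<mu> (1 + \<epsilon> * (ln (f2 t - b) - ln (b - (f1 t + f2 t) / 2))) * (deriv f2 t / (f2 t - b) + fbd t / (b - (f1 t + f2 t) / 2)))" for t
    by (simp add: g2e_def ss_def BB_def pp_def qq_def)
  have e4: "g2e \<epsilon> \<Phi> (a, t) = - (\<Phi> * \<epsilon> * deriv \<mu> (1 + \<epsilon> * (ln (f2 a - t) - ln (t - (f1 a + f2 a) / 2))) * ((\<lambda>_. deriv f2 a) t / (f2 a - t) + (\<lambda>_. fbd a) t / (t - (f1 a + f2 a) / 2)))" for t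
    by (simp add: g2e_def ss_def BB_def pp_def qq_def)
  have dfb: "(fbd has_real_derivative fbdd a) (at a)"
    unfolding fbd_def fbdd_def by (auto intro!: derivative_eq_intros f1D f2D)
  have dpx: "((\<lambda>t. f2 t - b) has_real_derivative deriv f2 a) (at a)"
    by (auto intro!: derivative_eq_intros)
  have dpy: "((\<lambda>t. f2 a - t) has_real_derivative - 1) (at b)"
    by (auto intro!: derivative_eq_intros)
  have dqy: "((\<lambda>t. t - (f1 a + f2 a) / 2) has_real_derivative 1) (at b)"
    by (auto intro!: derivative_eq_intros)
  have L1x: "((\<lambda>t. g1e \<epsilon> \<Phi> (t, b)) has_real_derivative \<Phi> * \<epsilon> * (deriv (deriv \<mu>) s * \<epsilon> * (deriv f2 a / P - (- fbd a) / Q) * (- 1 / P - 1 / Q)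
       + deriv \<mu> s * (deriv f2 a / P\<^sup>2 + (- fbd a) / Q\<^sup>2))) (at a)"
    unfolding e1 P_def Q_def s_def pp_def qq_def ss_def fst_conv snd_conv
    by (rule genL1[OF dpx dq_x pos muD(2)])
  show ?A unfolding pd1_def using DERIV_imp_deriv[OF has_field_derivative_transform_within_open[OF L1x opx aW(1) fx1]] by simp
  have L1y: "((\<lambda>t. g1e \<epsilon> \<Phi> (a, t)) has_real_derivative \<Phi> * \<epsilon> * (deriv (deriv \<mu>) s * \<epsilon> * ((- 1) / P - 1 / Q) * (- 1 / P - 1 / Q)
       + deriv \<mu> s * ((- 1) / P\<^sup>2 + 1 / Q\<^sup>2))) (at b)"
    unfolding e2 P_def Q_def s_def pp_def qq_def ss_def fst_conv snd_conv
    by (rule genL1[OF dpy dqy pos muD(2)])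
  show ?B unfolding pd2_def using DERIV_imp_deriv[OF has_field_derivative_transform_within_open[OF L1y opy aW(2) fy1]] by simp
  have L2x: "((\<lambda>t. g2e \<epsilon> \<Phi> (t, b)) has_real_derivative - (\<Phi> * \<epsilon> * (deriv (deriv \<mu>) s * \<epsilon> * (deriv f2 a / P - (- fbd a) / Q) * (deriv f2 a / P + fbd a / Q)
       + deriv \<mu> s * (deriv (deriv f2) a / P - deriv f2 a * deriv f2 a / P\<^sup>2 + fbdd a / Q - fbd a * (- fbd a) / Q\<^sup>2)))) (at a)"
    unfolding e3 P_def Q_def s_def pp_def qq_def ss_def fst_conv snd_conv
    by (rule genL2[OF dpx dq_x f2D(2) dfb pos muD(2)])
  show ?C unfolding pd1_def using DERIV_imp_deriv[OF has_field_derivative_transform_within_open[OF L2x opx aW(1) fx2]] by simp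
  have L2y: "((\<lambda>t. g2e \<epsilon> \<Phi> (a, t)) has_real_derivative - (\<Phi> * \<epsilon> * (deriv (deriv \<mu>) s * \<epsilon> * ((- 1) / P - 1 / Q) * (deriv f2 a / P + fbd a / Q)
       + deriv \<mu> s * (0 / P - deriv f2 a * (- 1) / P\<^sup>2 + 0 / Q - fbd a * 1 / Q\<^sup>2)))) (at b)"
    unfolding e4 P_def Q_def s_def pp_def qq_def ss_def fst_conv snd_conv
    by (rule genL2[OF dpy dqy DERIV_const DERIV_const pos muD(2)])
  show ?D unfolding pd2_def using DERIV_imp_deriv[OF has_field_derivative_transform_within_open[OF L2y opy aW(2) fy2]] by simp
qed

lemma pd_W0:
  assumes "0 < \<epsilon>" "x \<in> W0"
  shows "pd1 (flux_g1 f1 f2 \<mu> \<epsilon> \<Phi>) x = 0" "pd2 (flux_g1 f1 f2 \<mu> \<epsilon> \<Phi>) x = 0"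
    "pd1 (flux_g2 f1 f2 \<mu> \<epsilon> \<Phi>) x = 0" "pd2 (flux_g2 f1 f2 \<mu> \<epsilon> \<Phi>) x = 0"
proof -
  obtain a b where x: "x = (a, b)" by (cases x)
  have opx: "open {t. (t, b) \<in> W0}" and opy: "open {t. (a, t) \<in> W0}" using slice_open open_W by auto
  have aW: "a \<in> {t. (t, b) \<in> W0}" "b \<in> {t. (a, t) \<in> W0}" using assms x by auto
  have z: "\<And>y. y \<in> W0 \<Longrightarrow> 0 = flux_g1 f1 f2 \<mu> \<epsilon> \<Phi> y" "\<And>y. y \<in> W0 \<Longrightarrow> 0 = flux_g2 f1 f2 \<mu> \<epsilon> \<Phi> y"
    using fg_W0 assms(1) by auto
  show "pd1 (flux_g1 f1 f2 \<mu> \<epsilon> \<Phi>) x = 0" unfolding pd1_def x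
    using DERIV_imp_deriv[OF has_field_derivative_transform_within_open[OF DERIV_const opx aW(1)]] z by simp
  show "pd2 (flux_g1 f1 f2 \<mu> \<epsilon> \<Phi>) x = 0" unfolding pd2_def x
    using DERIV_imp_deriv[OF has_field_derivative_transform_within_open[OF DERIV_const opy aW(2)]] z by simp
  show "pd1 (flux_g2 f1 f2 \<mu> \<epsilon> \<Phi>) x = 0" unfolding pd1_def x
    using DERIV_imp_deriv[OF has_field_derivative_transform_within_open[OF DERIV_const opx aW(1)]] z by simp
  show "pd2 (flux_g2 f1 f2 \<mu> \<epsilon> \<Phi>) x = 0" unfolding pd2_def x
    using DERIV_imp_deriv[OF has_field_derivative_transform_within_open[OF DERIV_const opy aW(2)]] z by simp
qed


lemma pq_sum: "pp x + qq x = (f2 (fst x) - f1 (fst x)) / 2"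
  unfolding pp_def qq_def by (simp add: field_simps)

lemma supp_bounds:
  assumes W: "x \<in> W1" and e: "0 < \<epsilon>" and s0: "0 \<le> ss \<epsilon> x" and s1: "ss \<epsilon> x \<le> 1"
  defines "R \<equiv> 4 / (exp (- 1 / \<epsilon>) * (f2 (fst x) - f1 (fst x)))"
  shows "\<bar>inverse (pp x)\<bar> \<le> R" "\<bar>inverse (qq x)\<bar> \<le> R" "inverse (qq x) \<le> inverse (pp x)"
proof -
  define p q F \<delta> where "p = pp x" and "q = qq x" and "F = f2 (fst x) - f1 (fst x)" and "\<delta> = exp (- 1 / \<epsilon>)"
  have p: "p > 0" and q: "q > 0" using W unfolding W1_def p_def q_def by auto
  have sum: "p + q = F / 2" using pq_sum unfolding p_def q_def F_def by simp
  have d0: "\<delta> > 0" and d1: "\<delta> \<le> 1" unfolding \<delta>_def using e by auto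
  have "\<epsilon> * (ln p - ln q) \<le> 0" using s1 unfolding ss_def p_def q_def by simp
  then have "ln p \<le> ln q" using e by (simp add: mult_le_0_iff)
  then have pq: "p \<le> q" using p q by simp
  have "\<epsilon> * (ln p - ln q) \<ge> - 1" using s0 unfolding ss_def p_def q_def by simp
  then have "ln p - ln q \<ge> - 1 / \<epsilon>" using e by (simp add: field_simps)
  then have "ln (p / q) \<ge> - 1 / \<epsilon>" using p q by (simp add: ln_div)
  then have "p / q \<ge> \<delta>" unfolding \<delta>_def using p q by (metis exp_le_cancel_iff exp_ln divide_pos_pos)
  then have pd: "p \<ge> \<delta> * q" using q by (simp add: field_simps)
  have Fp: "F > 0" using sum p q by simp
  have qF: "q \<ge> F / 4" using sum pq by simp
  have pF: "p \<ge> \<delta> * F / 4" using pd qF d0 by (smt (verit) mult_left_mono times_divide_eq_right)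
  have R: "R = 4 / (\<delta> * F)" unfolding R_def \<delta>_def F_def by simp
  have "inverse p \<le> inverse (\<delta> * F / 4)" using pF d0 Fp by (intro le_imp_inverse_le) auto
  then show "\<bar>inverse (pp x)\<bar> \<le> R" using p unfolding R p_def[symmetric] by (simp add: field_simps)
  have "inverse q \<le> inverse (F / 4)" using qF Fp by (intro le_imp_inverse_le) auto
  also have "\<dots> \<le> inverse (\<delta> * F / 4)" using d0 d1 Fp by (intro le_imp_inverse_le) (auto simp: mult_left_le_one_le)
  finally show "\<bar>inverse (qq x)\<bar> \<le> R" using q unfolding R q_def[symmetric] by (simp add: field_simps)
  show "inverse (qq x) \<le> inverse (pp x)" using pq p unfolding p_def q_def by (intro le_imp_inverse_le) auto
qed


end


context chan begin

lemma avg_le: "x \<le> (u + v) / 2 \<Longrightarrow> v \<le> g \<Longrightarrow> u \<le> g \<Longrightarrow> x \<le> (g::real)" by argo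

lemma pointwise2:
  fixes \<epsilon> \<Phi> \<beta> \<Gamma> M1 M2 :: real and x :: "real \<times> real"
  assumes e: "0 < \<epsilon>" "\<epsilon> < 1" and \<Phi>: "0 \<le> \<Phi>" and xO: "x \<in> Omega f1 f2"
    and \<beta>: "1 \<le> \<beta>" "\<And>t. \<bar>deriv f1 t\<bar> \<le> \<beta>" "\<And>t. \<bar>deriv f2 t\<bar> \<le> \<beta>"
    and \<Gamma>: "0 \<le> \<Gamma>" "\<And>t. \<bar>deriv (deriv f1) t * (f2 t - f1 t)\<bar> \<le> \<Gamma>" "\<And>t. \<bar>deriv (deriv f2) t * (f2 t - f1 t)\<bar> \<le> \<Gamma>"
    and M: "0 \<le> M1" "0 \<le> M2" "\<And>s. \<bar>deriv \<mu> s\<bar> \<le> M1" "\<And>s. \<bar>deriv (deriv \<mu>) s\<bar> \<le> M2"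
  defines "K \<equiv> 4 * \<beta>\<^sup>2 * (M1 + M2) + 2 * \<Gamma> * M1"
    and "R \<equiv> 4 / (exp (- 1 / \<epsilon>) * (f2 (fst x) - f1 (fst x)))"
  shows "\<bar>flux_g1 f1 f2 \<mu> \<epsilon> \<Phi> x\<bar> \<le> \<Phi> * K * R" "\<bar>flux_g2 f1 f2 \<mu> \<epsilon> \<Phi> x\<bar> \<le> \<Phi> * K * R"
    "\<bar>pd1 (flux_g1 f1 f2 \<mu> \<epsilon> \<Phi>) x\<bar> \<le> \<Phi> * K * R\<^sup>2" "\<bar>pd2 (flux_g1 f1 f2 \<mu> \<epsilon> \<Phi>) x\<bar> \<le> \<Phi> * K * R\<^sup>2"
    "\<bar>pd1 (flux_g2 f1 f2 \<mu> \<epsilon> \<Phi>) x\<bar> \<le> \<Phi> * K * R\<^sup>2" "\<bar>pd2 (flux_g2 f1 f2 \<mu> \<epsilon> \<Phi>) x\<bar> \<le> \<Phi> * K * R\<^sup>2"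
proof -
  obtain a b where x: "x = (a, b)" by (cases x)
  define F where "F = f2 a - f1 a"
  have F: "F > 0" using xO unfolding x F_def Omega_def by auto
  have R0: "R > 0" unfolding R_def x using F F_def by simp
  have K0: "K \<ge> 0" unfolding K_def using M \<Gamma> by simp
  have b2: "\<beta> \<le> \<beta>\<^sup>2" using \<beta>(1) by (simp add: power2_eq_square)
  have nn: "0 \<le> \<Phi> * K * R" "0 \<le> \<Phi> * K * R\<^sup>2" using \<Phi> K0 R0 by auto
  have all: "\<bar>flux_g1 f1 f2 \<mu> \<epsilon> \<Phi> x\<bar> \<le> \<Phi> * K * R \<and> \<bar>flux_g2 f1 f2 \<mu> \<epsilon> \<Phi> x\<bar> \<le> \<Phi> * K * R \<and>
    \<bar>pd1 (flux_g1 f1 f2 \<mu> \<epsilon> \<Phi>) x\<bar> \<le> \<Phi> * K * R\<^sup>2 \<and> \<bar>pd2 (flux_g1 f1 f2 \<mu> \<epsilon> \<Phi>) x\<bar> \<le> \<Phi> * K * R\<^sup>2 \<and>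
    \<bar>pd1 (flux_g2 f1 f2 \<mu> \<epsilon> \<Phi>) x\<bar> \<le> \<Phi> * K * R\<^sup>2 \<and> \<bar>pd2 (flux_g2 f1 f2 \<mu> \<epsilon> \<Phi>) x\<bar> \<le> \<Phi> * K * R\<^sup>2"
  proof (cases "x \<in> W1")
    case False
    then have "x \<in> W0" using xO Omega_W by auto
    then show ?thesis using fg_W0[OF e(1)] pd_W0[OF e(1)] nn by simp
  next
    case W: True
    define s where "s = ss \<epsilon> (a, b)"
    show ?thesis
    proof (cases "0 \<le> s \<and> s \<le> 1")
      case False
      then have z: "deriv \<mu> s = 0" "deriv (deriv \<mu>) s = 0" using mu_supp by auto
      show ?thesis using fg_W1[OF W] pd_W1[OF W[unfolded x]] nn z
        unfolding x g1e_def g2e_def s_def by simp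
    next
      case True
      have iP: "\<bar>inverse (pp (a, b))\<bar> \<le> R" and iQ: "\<bar>inverse (qq (a, b))\<bar> \<le> R"
        using supp_bounds[OF W e(1)] True unfolding s_def R_def x by auto
      have fb: "\<bar>fbd a\<bar> \<le> \<beta>" "\<bar>- fbd a\<bar> \<le> \<beta>" unfolding fbd_def using \<beta>(2)[of a] \<beta>(3)[of a] by auto
      have FR: "\<Gamma> / F \<le> \<Gamma> * R"
      proof -
        have "exp (- 1 / \<epsilon>) \<le> 1" using e by simp
        then have "exp (- 1 / \<epsilon>) * F \<le> F" using F by (simp add: mult_left_le_one_le)
        then have "1 / F \<le> 1 / (exp (- 1 / \<epsilon>) * F)" using F by (intro divide_left_mono) auto
        also have "\<dots> \<le> 4 / (exp (- 1 / \<epsilon>) * F)" using F by (intro divide_right_mono) auto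
        finally have "1 / F \<le> R" unfolding R_def x F_def by simp
        then show ?thesis using \<Gamma>(1) by (metis mult_left_mono times_divide_eq_right mult_1_right)
      qed
      have f2dd: "\<bar>deriv (deriv f2) a\<bar> \<le> \<Gamma> * R"
      proof -
        have "\<bar>deriv (deriv f2) a\<bar> * F \<le> \<Gamma>" using \<Gamma>(3)[of a] F unfolding F_def by (simp add: abs_mult)
        then have "\<bar>deriv (deriv f2) a\<bar> \<le> \<Gamma> / F" using F by (simp add: field_simps)
        then show ?thesis using FR by linarith
      qed
      have fbdd: "\<bar>fbdd a\<bar> \<le> \<Gamma> * R"
      proof -
        have "\<bar>deriv (deriv f2) a\<bar> * F \<le> \<Gamma>" "\<bar>deriv (deriv f1) a\<bar> * F \<le> \<Gamma>"
          using \<Gamma>(2,3)[of a] F unfolding F_def by (simp_all add: abs_mult)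
        then have "\<bar>deriv (deriv f2) a\<bar> \<le> \<Gamma> / F" "\<bar>deriv (deriv f1) a\<bar> \<le> \<Gamma> / F" using F by (simp_all add: field_simps)
        moreover have "\<bar>fbdd a\<bar> \<le> (\<bar>deriv (deriv f1) a\<bar> + \<bar>deriv (deriv f2) a\<bar>) / 2"
          unfolding fbdd_def using abs_triangle_ineq[of "deriv (deriv f1) a" "deriv (deriv f2) a"] by simp
        ultimately have "\<bar>fbdd a\<bar> \<le> \<Gamma> / F" using avg_le by blast
        then show ?thesis using FR by linarith
      qed
      have m1: "\<bar>- 1 :: real\<bar> \<le> \<beta>" "\<bar>1 :: real\<bar> \<le> \<beta>" "\<bar>0 :: real\<bar> \<le> \<Gamma> * R" using \<beta>(1) \<Gamma>(1) R0 by auto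
      have ep: "0 \<le> \<epsilon>" "\<epsilon> \<le> 1" using e by auto
      have KG1: "\<Phi> * (2 * M1) * R \<le> \<Phi> * K * R" and KG2: "\<Phi> * (2 * \<beta> * M1) * R \<le> \<Phi> * K * R"
      proof -
        have h: "\<beta> * M1 \<le> \<beta>\<^sup>2 * M1" "M1 \<le> \<beta>\<^sup>2 * M1" "0 \<le> \<beta>\<^sup>2 * M2" "0 \<le> \<Gamma> * M1"
        proof -
          have "1 \<le> \<beta>\<^sup>2" using b2 \<beta>(1) by linarith
          then show "\<beta> * M1 \<le> \<beta>\<^sup>2 * M1" "M1 \<le> \<beta>\<^sup>2 * M1" "0 \<le> \<beta>\<^sup>2 * M2" "0 \<le> \<Gamma> * M1"
            using b2 M \<Gamma> mult_right_mono[of 1 "\<beta>\<^sup>2" M1] by (auto intro: mult_right_mono)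
        qed
        have Ke: "K = 4 * (\<beta>\<^sup>2 * M1) + 4 * (\<beta>\<^sup>2 * M2) + 2 * (\<Gamma> * M1)" unfolding K_def by (simp add: algebra_simps)
        have "2 * M1 \<le> K" "2 * (\<beta> * M1) \<le> K" unfolding Ke using h M by linarith+
        then have "2 * M1 \<le> K" "2 * \<beta> * M1 \<le> K" by (simp_all add: mult.assoc)
        then show "\<Phi> * (2 * M1) * R \<le> \<Phi> * K * R" "\<Phi> * (2 * \<beta> * M1) * R \<le> \<Phi> * K * R"
          using \<Phi> R0 by (simp_all add: mult_left_mono mult_right_mono)
      qed
      have KL1: "\<Phi> * (4 * \<beta> * M2 + 2 * \<beta> * M1) * R\<^sup>2 \<le> \<Phi> * K * R\<^sup>2"
        and KL2: "\<Phi> * (4 * \<beta>\<^sup>2 * M2 + M1 * (2 * \<Gamma> + 2 * \<beta>\<^sup>2)) * R\<^sup>2 \<le> \<Phi> * K * R\<^sup>2"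
      proof -
        have h: "\<beta> * M1 \<le> \<beta>\<^sup>2 * M1" "\<beta> * M2 \<le> \<beta>\<^sup>2 * M2" "0 \<le> \<beta>\<^sup>2 * M1"
          using b2 M \<Gamma> \<beta>(1) by (auto intro: mult_right_mono)
        have Ke: "K = 4 * (\<beta>\<^sup>2 * M1) + 4 * (\<beta>\<^sup>2 * M2) + 2 * (\<Gamma> * M1)" unfolding K_def by (simp add: algebra_simps)
        have e1: "4 * \<beta> * M2 + 2 * \<beta> * M1 = 4 * (\<beta> * M2) + 2 * (\<beta> * M1)" by (simp add: algebra_simps)
        have e2: "4 * \<beta>\<^sup>2 * M2 + M1 * (2 * \<Gamma> + 2 * \<beta>\<^sup>2) = 4 * (\<beta>\<^sup>2 * M2) + 2 * (\<Gamma> * M1) + 2 * (\<beta>\<^sup>2 * M1)" by (simp add: algebra_simps)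
        have "4 * \<beta> * M2 + 2 * \<beta> * M1 \<le> K" "4 * \<beta>\<^sup>2 * M2 + M1 * (2 * \<Gamma> + 2 * \<beta>\<^sup>2) \<le> K"
          unfolding Ke e1 e2 using h M mult_nonneg_nonneg[OF \<Gamma>(1) M(1)] by linarith+
        then show "\<Phi> * (4 * \<beta> * M2 + 2 * \<beta> * M1) * R\<^sup>2 \<le> \<Phi> * K * R\<^sup>2"
          "\<Phi> * (4 * \<beta>\<^sup>2 * M2 + M1 * (2 * \<Gamma> + 2 * \<beta>\<^sup>2)) * R\<^sup>2 \<le> \<Phi> * K * R\<^sup>2"
          using \<Phi> by (simp_all add: mult_left_mono mult_right_mono)
      qed
      have g1: "\<bar>flux_g1 f1 f2 \<mu> \<epsilon> \<Phi> x\<bar> \<le> \<Phi> * K * R"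
        unfolding x fg_W1(1)[OF W[unfolded x]] g1e_def AA_def
        by (rule order_trans[OF bndG1[OF iP iQ M(3)[of "ss \<epsilon> (a, b)"] ep \<Phi>] KG1])
      have g2: "\<bar>flux_g2 f1 f2 \<mu> \<epsilon> \<Phi> x\<bar> \<le> \<Phi> * K * R"
        unfolding x fg_W1(2)[OF W[unfolded x]] g2e_def BB_def fst_conv
        by (rule order_trans[OF bndG2[OF iP iQ \<beta>(3) fb(1) M(3)[of "ss \<epsilon> (a, b)"] ep \<Phi>] KG2])
      have p1: "\<bar>pd1 (flux_g1 f1 f2 \<mu> \<epsilon> \<Phi>) x\<bar> \<le> \<Phi> * K * R\<^sup>2"
        unfolding x pd_W1(1)[OF W[unfolded x]]
        by (rule order_trans[OF bndL1[OF iP iQ \<beta>(3) fb(2) \<beta>(1) M(3)[of "ss \<epsilon> (a, b)"] M(4)[of "ss \<epsilon> (a, b)"] ep \<Phi>] KL1])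
      have p2: "\<bar>pd2 (flux_g1 f1 f2 \<mu> \<epsilon> \<Phi>) x\<bar> \<le> \<Phi> * K * R\<^sup>2"
        unfolding x pd_W1(2)[OF W[unfolded x]]
        by (rule order_trans[OF bndL1[OF iP iQ m1(1) m1(2) \<beta>(1) M(3)[of "ss \<epsilon> (a, b)"] M(4)[of "ss \<epsilon> (a, b)"] ep \<Phi>] KL1])
      have p3: "\<bar>pd1 (flux_g2 f1 f2 \<mu> \<epsilon> \<Phi>) x\<bar> \<le> \<Phi> * K * R\<^sup>2"
        unfolding x pd_W1(3)[OF W[unfolded x]]
        by (rule order_trans[OF bndL2[OF iP iQ \<beta>(3) fb(2) \<beta>(3) fb(1) f2dd fbdd M(3)[of "ss \<epsilon> (a, b)"] M(4)[of "ss \<epsilon> (a, b)"] ep \<Phi>] KL2])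
      have p4: "\<bar>pd2 (flux_g2 f1 f2 \<mu> \<epsilon> \<Phi>) x\<bar> \<le> \<Phi> * K * R\<^sup>2"
        unfolding x pd_W1(4)[OF W[unfolded x]]
        by (rule order_trans[OF bndL2[OF iP iQ m1(1) m1(2) \<beta>(3) fb(1) m1(3) m1(3) M(3)[of "ss \<epsilon> (a, b)"] M(4)[of "ss \<epsilon> (a, b)"] ep \<Phi>] KL2])
      show ?thesis using g1 g2 p1 p2 p3 p4 by simp
    qed
  qed
  then show "\<bar>flux_g1 f1 f2 \<mu> \<epsilon> \<Phi> x\<bar> \<le> \<Phi> * K * R" "\<bar>flux_g2 f1 f2 \<mu> \<epsilon> \<Phi> x\<bar> \<le> \<Phi> * K * R"
    "\<bar>pd1 (flux_g1 f1 f2 \<mu> \<epsilon> \<Phi>) x\<bar> \<le> \<Phi> * K * R\<^sup>2" "\<bar>pd2 (flux_g1 f1 f2 \<mu> \<epsilon> \<Phi>) x\<bar> \<le> \<Phi> * K * R\<^sup>2"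
    "\<bar>pd1 (flux_g2 f1 f2 \<mu> \<epsilon> \<Phi>) x\<bar> \<le> \<Phi> * K * R\<^sup>2" "\<bar>pd2 (flux_g2 f1 f2 \<mu> \<epsilon> \<Phi>) x\<bar> \<le> \<Phi> * K * R\<^sup>2"
    by auto
qed


lemma g1_bounds:
  fixes \<epsilon> \<Phi> M1 :: real and x :: "real \<times> real"
  assumes e: "0 < \<epsilon>" "\<epsilon> < 1" and \<Phi>: "0 \<le> \<Phi>" and xO: "x \<in> Omega f1 f2"
    and M: "0 \<le> M1" "\<And>s. \<bar>deriv \<mu> s\<bar> \<le> M1"
  defines "R \<equiv> 4 / (exp (- 1 / \<epsilon>) * (f2 (fst x) - f1 (fst x)))"
  shows "\<bar>flux_g1 f1 f2 \<mu> \<epsilon> \<Phi> x\<bar> \<le> \<Phi> * (2 * M1) * R"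
    "\<bar>flux_g1 f1 f2 \<mu> \<epsilon> \<Phi> x\<bar> \<le> 2 * \<Phi> * \<epsilon> * M1 / pp x"
proof -
  obtain a b where x: "x = (a, b)" by (cases x)
  have F: "f2 a - f1 a > 0" using xO unfolding x Omega_def by auto
  have R0: "R > 0" unfolding R_def x using F by simp
  have p0: "pp x > 0" using xO unfolding Omega_def pp_def by auto
  have nn: "0 \<le> \<Phi> * (2 * M1) * R" "0 \<le> 2 * \<Phi> * \<epsilon> * M1 / pp x" using \<Phi> M R0 p0 e by auto
  have "\<bar>flux_g1 f1 f2 \<mu> \<epsilon> \<Phi> x\<bar> \<le> \<Phi> * (2 * M1) * R \<and> \<bar>flux_g1 f1 f2 \<mu> \<epsilon> \<Phi> x\<bar> \<le> 2 * \<Phi> * \<epsilon> * M1 / pp x"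
  proof (cases "x \<in> W1")
    case False
    then have "x \<in> W0" using xO Omega_W by auto
    then show ?thesis using fg_W0[OF e(1)] nn by simp
  next
    case W: True
    show ?thesis
    proof (cases "0 \<le> ss \<epsilon> x \<and> ss \<epsilon> x \<le> 1")
      case False
      then have z: "deriv \<mu> (ss \<epsilon> x) = 0" using mu_supp by auto
      show ?thesis using fg_W1[OF W] nn z unfolding g1e_def by simp
    next
      case True
      have iP: "\<bar>inverse (pp x)\<bar> \<le> R" and iQ: "\<bar>inverse (qq x)\<bar> \<le> R" and qp: "inverse (qq x) \<le> inverse (pp x)"
        using supp_bounds[OF W e(1)] True unfolding R_def by auto
      have ep: "0 \<le> \<epsilon>" "\<epsilon> \<le> 1" using e by auto
      have g1: "\<bar>flux_g1 f1 f2 \<mu> \<epsilon> \<Phi> x\<bar> \<le> \<Phi> * (2 * M1) * R"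
        unfolding fg_W1(1)[OF W] g1e_def AA_def
        by (rule bndG1[OF iP iQ M(2)[of "ss \<epsilon> x"] ep \<Phi>])
      have q0: "qq x > 0" using W unfolding W1_def by auto
      have A: "\<bar>- 1 / pp x - 1 / qq x\<bar> \<le> 2 / pp x"
      proof -
        have e1: "- 1 / pp x - 1 / qq x = - (inverse (pp x) + inverse (qq x))" by (simp add: divide_inverse)
        have "inverse (pp x) + inverse (qq x) > 0" using p0 q0 by (simp add: add_pos_pos)
        then have "\<bar>- 1 / pp x - 1 / qq x\<bar> = inverse (pp x) + inverse (qq x)" unfolding e1 by simp
        also have "\<dots> \<le> 2 / pp x" using qp by (simp add: divide_inverse)
        finally show ?thesis .
      qed
      have "\<bar>flux_g1 f1 f2 \<mu> \<epsilon> \<Phi> x\<bar> = \<Phi> * \<epsilon> * \<bar>deriv \<mu> (ss \<epsilon> x)\<bar> * \<bar>- 1 / pp x - 1 / qq x\<bar>"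
        unfolding fg_W1(1)[OF W] g1e_def AA_def using \<Phi> e by (simp add: abs_mult)
      also have "\<dots> \<le> \<Phi> * \<epsilon> * M1 * (2 / pp x)"
        using \<Phi> e M(2)[of "ss \<epsilon> x"] A by (intro mult_mono mult_left_mono) auto
      also have "\<dots> = 2 * \<Phi> * \<epsilon> * M1 / pp x" by simp
      finally show ?thesis using g1 by simp
    qed
  qed
  then show "\<bar>flux_g1 f1 f2 \<mu> \<epsilon> \<Phi> x\<bar> \<le> \<Phi> * (2 * M1) * R"
    "\<bar>flux_g1 f1 f2 \<mu> \<epsilon> \<Phi> x\<bar> \<le> 2 * \<Phi> * \<epsilon> * M1 / pp x" by auto
qed

end



lemma tonelli2:
  fixes h :: "real \<times> real \<Rightarrow> ennreal"
  assumes h: "h \<in> borel_measurable borel"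
  shows "(\<integral>\<^sup>+x. h x \<partial>lebesgue) = (\<integral>\<^sup>+x1. (\<integral>\<^sup>+x2. h (x1, x2) \<partial>lborel) \<partial>lborel)"
proof -
  have m: "h \<in> borel_measurable (lborel \<Otimes>\<^sub>M lborel)"
    using h by (simp add: lborel_prod measurable_lborel1)
  have "(\<integral>\<^sup>+x. h x \<partial>lebesgue) = (\<integral>\<^sup>+x. h x \<partial>lborel)" by (rule nn_integral_completion)
  also have "\<dots> = (\<integral>\<^sup>+x. h x \<partial>(lborel \<Otimes>\<^sub>M lborel))" by (simp add: lborel_prod)
  also have "\<dots> = (\<integral>\<^sup>+x1. (\<integral>\<^sup>+x2. h (x1, x2) \<partial>lborel) \<partial>lborel)"
    by (rule lborel.nn_integral_fst[symmetric, OF m])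
  finally show ?thesis .
qed


lemma ind_ennreal_fun: "(\<lambda>x. indicator A x * ennreal (f x)) = (\<lambda>x. ennreal (indicator A x * f x))"
  by (auto simp: fun_eq_iff split: split_indicator)

lemma meas_indf:
  assumes "A \<in> sets borel" "f \<in> borel_measurable borel"
  shows "(\<lambda>x. indicator A x * ennreal (f x)) \<in> borel_measurable borel"
  unfolding ind_ennreal_fun using assms by measurable

lemma C1_cont: assumes "C1_with_grad \<phi> p1 p2" shows "continuous_on UNIV \<phi>"
  using assms unfolding C1_with_grad_def
  by (intro continuous_at_imp_continuous_on) (auto intro: has_derivative_continuous)

lemma C1_dy: assumes "C1_with_grad \<phi> p1 p2"
  shows "((\<lambda>y. \<phi> (t, y)) has_real_derivative p2 (t, y)) (at y)"
proof -
  have d: "(\<phi> has_derivative (\<lambda>h. p1 (t, y) * fst h + p2 (t, y) * snd h)) (at (t, y))"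
    using assms unfolding C1_with_grad_def by blast
  have "((\<lambda>y. (t, y)) has_derivative (\<lambda>h. (0, h))) (at y)"
    by (auto intro!: derivative_eq_intros)
  from has_derivative_compose[OF this d]
  have "((\<lambda>y. \<phi> (t, y)) has_derivative (\<lambda>h. p2 (t, y) * h)) (at y)" by simp
  moreover have "(\<lambda>h. p2 (t, y) * h) = (*) (p2 (t, y))" by (rule ext) simp
  ultimately show ?thesis by (simp add: has_field_derivative_def)
qed

context chan begin

lemma open_Omab: "open (Omega_ab f1 f2 a b)"
proof -
  have "Omega_ab f1 f2 a b = {x. f1 (fst x) < snd x} \<inter> {x. snd x < f2 (fst x)} \<inter> {x. a < fst x} \<inter> {x. fst x < b}"
    unfolding Omega_ab_def Omega_def by auto
  then show ?thesis
    by (simp only:) (intro open_Int open_Collect_less continuous_intros)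
qed

lemma borel_Omab: "Omega_ab f1 f2 a b \<in> sets borel"
  using open_Omab by auto

lemma pp_cont: "continuous_on UNIV pp"
  unfolding pp_def by (intro continuous_intros)

lemma hardy2d:
  assumes C1: "C1_with_grad \<phi> p1 p2" and z: "\<forall>x\<in>S2_ab f2 a b. \<phi> x = 0"
  shows "(\<integral>\<^sup>+x. indicator (Omega_ab f1 f2 a b) x * ennreal ((\<phi> x)\<^sup>2 / (pp x)\<^sup>2) \<partial>lebesgue)
     \<le> 4 * sqint (Omega_ab f1 f2 a b) p2"
proof -
  let ?U = "Omega_ab f1 f2 a b"
  have cphi: "continuous_on UNIV \<phi>" by (rule C1_cont[OF C1])
  have cp2: "continuous_on UNIV p2" using C1 unfolding C1_with_grad_def by blast
  have mF: "(\<lambda>x. (\<phi> x)\<^sup>2 / (pp x)\<^sup>2) \<in> borel_measurable borel"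
    using borel_measurable_continuous_onI[OF cphi] borel_measurable_continuous_onI[OF pp_cont] by measurable
  have mG: "(\<lambda>x. (p2 x)\<^sup>2) \<in> borel_measurable borel"
    using borel_measurable_continuous_onI[OF cp2] by measurable
  have mA: "(\<lambda>x. indicator ?U x * ennreal ((\<phi> x)\<^sup>2 / (pp x)\<^sup>2)) \<in> borel_measurable borel"
    by (rule meas_indf[OF borel_Omab mF])
  have mB: "(\<lambda>x. indicator ?U x * ennreal ((p2 x)\<^sup>2)) \<in> borel_measurable borel"
    by (rule meas_indf[OF borel_Omab mG])
  have inner: "(\<integral>\<^sup>+y. indicator ?U (t, y) * ennreal ((\<phi> (t, y))\<^sup>2 / (pp (t, y))\<^sup>2) \<partial>lborel)
      \<le> 4 * (\<integral>\<^sup>+y. indicator ?U (t, y) * ennreal ((p2 (t, y))\<^sup>2) \<partial>lborel)" for t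
  proof (cases "a < t \<and> t < b")
    case False
    then have "\<And>y. (t, y) \<notin> ?U" unfolding Omega_ab_def by auto
    then show ?thesis by simp
  next
    case True
    have U: "(t, y) \<in> ?U \<longleftrightarrow> y \<in> {f1 t<..<f2 t}" for y
      using True unfolding Omega_ab_def Omega_def by auto
    have ch: "f1 t < f2 t" using d_pos by (metis add.commute diff_gt_0_iff_gt order_less_le_trans)
    have uh: "\<phi> (t, f2 t) = 0" using z True unfolding S2_ab_def by auto
    have cont': "continuous_on {f1 t..f2 t} (\<lambda>y. p2 (t, y))"
      by (rule continuous_on_subset[OF _ subset_UNIV]) (intro continuous_on_compose2[OF cp2] continuous_intros, auto)
    have h1: "(\<integral>\<^sup>+y. indicator {f1 t<..<f2 t} y * ennreal ((\<phi> (t, y))\<^sup>2 / (f2 t - y)\<^sup>2) \<partial>lborel)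
       \<le> 4 * (\<integral>\<^sup>+y. indicator {f1 t<..<f2 t} y * ennreal ((p2 (t, y))\<^sup>2) \<partial>lborel)"
      by (rule hardy_1d[OF ch C1_dy[OF C1] cont' uh])
    have e1: "(\<lambda>y. indicator ?U (t, y) * ennreal ((\<phi> (t, y))\<^sup>2 / (pp (t, y))\<^sup>2))
       = (\<lambda>y. indicator {f1 t<..<f2 t} y * ennreal ((\<phi> (t, y))\<^sup>2 / (f2 t - y)\<^sup>2))"
      by (auto simp: fun_eq_iff U pp_def split: split_indicator)
    have e2: "(\<lambda>y. indicator ?U (t, y) * ennreal ((p2 (t, y))\<^sup>2))
       = (\<lambda>y. indicator {f1 t<..<f2 t} y * ennreal ((p2 (t, y))\<^sup>2))"
      by (auto simp: fun_eq_iff U split: split_indicator)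
    show ?thesis unfolding e1 e2 by (rule h1)
  qed
  have "(\<integral>\<^sup>+x. indicator ?U x * ennreal ((\<phi> x)\<^sup>2 / (pp x)\<^sup>2) \<partial>lebesgue)
     = (\<integral>\<^sup>+t. (\<integral>\<^sup>+y. indicator ?U (t, y) * ennreal ((\<phi> (t, y))\<^sup>2 / (pp (t, y))\<^sup>2) \<partial>lborel) \<partial>lborel)"
    using tonelli2[OF mA] by simp
  also have "\<dots> \<le> (\<integral>\<^sup>+t. 4 * (\<integral>\<^sup>+y. indicator ?U (t, y) * ennreal ((p2 (t, y))\<^sup>2) \<partial>lborel) \<partial>lborel)"
    by (intro nn_integral_mono inner)
  also have "\<dots> = 4 * (\<integral>\<^sup>+t. (\<integral>\<^sup>+y. indicator ?U (t, y) * ennreal ((p2 (t, y))\<^sup>2) \<partial>lborel) \<partial>lborel)"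
  proof (rule nn_integral_cmult)
    have "(\<lambda>x. indicator ?U x * ennreal ((p2 x)\<^sup>2)) \<in> borel_measurable (lborel \<Otimes>\<^sub>M lborel)"
      using mB by (simp add: lborel_prod measurable_lborel1)
    from lborel.borel_measurable_nn_integral_fst[OF this]
    show "(\<lambda>t. \<integral>\<^sup>+y. indicator ?U (t, y) * ennreal ((p2 (t, y))\<^sup>2) \<partial>lborel) \<in> borel_measurable lborel" by simp
  qed
  also have "\<dots> = 4 * sqint ?U p2"
    unfolding sqint_def using tonelli2[OF mB] by simp
  finally show ?thesis .
qed


lemma sq_split1: "(y::real)\<^sup>2 \<le> 2 * (x - y)\<^sup>2 + 2 * x\<^sup>2"
proof -
  have "2 * (x - y)\<^sup>2 + 2 * x\<^sup>2 - y\<^sup>2 = (2 * x - y)\<^sup>2" by (simp add: power2_eq_square algebra_simps)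
  then show ?thesis by (metis diff_ge_0_iff_ge zero_le_power2)
qed

lemma sq_split2: "(q::real)\<^sup>2 \<le> 2 * v\<^sup>2 + 2 * (q - v)\<^sup>2"
proof -
  have "2 * v\<^sup>2 + 2 * (q - v)\<^sup>2 - q\<^sup>2 = (q - 2 * v)\<^sup>2" by (simp add: power2_eq_square algebra_simps)
  then show ?thesis by (metis diff_ge_0_iff_ge zero_le_power2)
qed

lemma borel_leb: "f \<in> borel_measurable borel \<Longrightarrow> f \<in> borel_measurable lebesgue"
  by (rule measurable_completion) simp

lemma d_bound: "\<exists>d>0. \<forall>t. d \<le> f2 t - f1 t" by (rule d_pos)

lemma part1:
  "\<exists>C. \<forall>\<epsilon> \<Phi> a b w v1 v2.
        0 < \<epsilon> \<and> \<epsilon> < 1 \<and> 0 \<le> \<Phi> \<and> a < b \<and>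
        H1_weak (Omega_ab f1 f2 a b) w v1 v2 \<and>
        zero_trace_on (Omega_ab f1 f2 a b) (S2_ab f2 a b) w v1 v2 \<longrightarrow>
        (\<integral>\<^sup>+ x. indicator (Omega_ab f1 f2 a b) x *
             ennreal ((flux_g1 f1 f2 \<mu> \<epsilon> \<Phi> x)\<^sup>2 * (w x)\<^sup>2) \<partial>lebesgue)
        \<le> ennreal (C * \<Phi>\<^sup>2 * \<epsilon>\<^sup>2) * sqint (Omega_ab f1 f2 a b) v2"
proof -
  obtain M1 M2 where M: "M1 \<ge> 0" "\<And>s. \<bar>deriv \<mu> s\<bar> \<le> M1" using mu_bounds by blast
  obtain d where d: "d > 0" "\<And>t. d \<le> f2 t - f1 t" using d_pos by blast
  show ?thesis
  proof (rule exI[of _ "64 * M1\<^sup>2"], intro allI impI, elim conjE)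
    fix \<epsilon> \<Phi> a b :: real and w v1 v2 :: "real \<times> real \<Rightarrow> real"
    assume e: "0 < \<epsilon>" "\<epsilon> < 1" and \<Phi>: "0 \<le> \<Phi>" and ab: "a < b"
      and H1: "H1_weak (Omega_ab f1 f2 a b) w v1 v2"
      and ZT: "zero_trace_on (Omega_ab f1 f2 a b) (S2_ab f2 a b) w v1 v2"
    let ?U = "Omega_ab f1 f2 a b"
    let ?g = "flux_g1 f1 f2 \<mu> \<epsilon> \<Phi>"
    obtain \<phi> q1 q2 where \<phi>: "\<And>n. C1_with_grad (\<phi> n) (q1 n) (q2 n)" "\<And>n. \<forall>x\<in>S2_ab f2 a b. \<phi> n x = 0"
      and X: "(\<lambda>n. sqint ?U (\<lambda>x. \<phi> n x - w x)) \<longlonglongrightarrow> 0"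
      and Y: "(\<lambda>n. sqint ?U (\<lambda>x. q2 n x - v2 x)) \<longlonglongrightarrow> 0"
      using ZT unfolding zero_trace_on_def by blast
    have mw: "(\<lambda>x. indicator ?U x * w x) \<in> borel_measurable lebesgue"
      and mv2: "(\<lambda>x. indicator ?U x * v2 x) \<in> borel_measurable lebesgue"
      using H1 unfolding H1_weak_def by auto
    define B0 where "B0 = \<Phi> * (2 * M1) * (4 / (exp (- 1 / \<epsilon>) * d))"
    define c0 where "c0 = 2 * \<Phi> * \<epsilon> * M1"
    have B0: "\<bar>?g x\<bar> \<le> B0" if "x \<in> ?U" for x
    proof -
      have xO: "x \<in> Omega f1 f2" using that unfolding Omega_ab_def by auto
      have F: "d \<le> f2 (fst x) - f1 (fst x)" using d by auto
      have "4 / (exp (- 1 / \<epsilon>) * (f2 (fst x) - f1 (fst x))) \<le> 4 / (exp (- 1 / \<epsilon>) * d)"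
        using F d(1) by (intro divide_left_mono mult_left_mono) auto
      then have "\<Phi> * (2 * M1) * (4 / (exp (- 1 / \<epsilon>) * (f2 (fst x) - f1 (fst x)))) \<le> B0"
        unfolding B0_def using \<Phi> M(1) by (intro mult_left_mono) auto
      then show ?thesis using g1_bounds(1)[OF e \<Phi> xO M] by linarith
    qed
    have c0: "\<bar>?g x\<bar> \<le> c0 / pp x" if "x \<in> ?U" for x
      using g1_bounds(2)[OF e \<Phi> _ M, of x] that unfolding Omega_ab_def c0_def by auto
    define HI where "HI n = (\<integral>\<^sup>+x. indicator ?U x * ennreal ((\<phi> n x)\<^sup>2 / (pp x)\<^sup>2) \<partial>lebesgue)" for n
    define S where "S = sqint ?U v2"
    define Xn where "Xn n = sqint ?U (\<lambda>x. \<phi> n x - w x)" for n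
    define Yn where "Yn n = sqint ?U (\<lambda>x. q2 n x - v2 x)" for n
    have step: "(\<integral>\<^sup>+ x. indicator ?U x * ennreal ((?g x)\<^sup>2 * (w x)\<^sup>2) \<partial>lebesgue)
        \<le> ennreal (2 * B0\<^sup>2) * Xn n + ennreal (2 * c0\<^sup>2) * (4 * (2 * S + 2 * Yn n))" for n
    proof -
      have pt: "indicator ?U x * ennreal ((?g x)\<^sup>2 * (w x)\<^sup>2)
          \<le> ennreal (2 * B0\<^sup>2) * (indicator ?U x * ennreal ((\<phi> n x - w x)\<^sup>2))
            + ennreal (2 * c0\<^sup>2) * (indicator ?U x * ennreal ((\<phi> n x)\<^sup>2 / (pp x)\<^sup>2))" for x
      proof (cases "x \<in> ?U")
        case False then show ?thesis by simp
      next
        case True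
        have p0: "pp x > 0" using True unfolding Omega_ab_def Omega_def pp_def by auto
        have g2a: "(?g x)\<^sup>2 \<le> B0\<^sup>2" using B0[OF True] by (metis abs_ge_zero power2_abs power_mono)
        have g2b: "(?g x)\<^sup>2 \<le> (c0 / pp x)\<^sup>2" using c0[OF True] by (metis abs_ge_zero power2_abs power_mono)
        have w2: "(w x)\<^sup>2 \<le> 2 * (\<phi> n x - w x)\<^sup>2 + 2 * (\<phi> n x)\<^sup>2" by (rule sq_split1)
        have "(?g x)\<^sup>2 * (w x)\<^sup>2 \<le> (?g x)\<^sup>2 * (2 * (\<phi> n x - w x)\<^sup>2 + 2 * (\<phi> n x)\<^sup>2)"
          by (intro mult_left_mono w2) simp
        also have "\<dots> = 2 * ((?g x)\<^sup>2 * (\<phi> n x - w x)\<^sup>2) + 2 * ((?g x)\<^sup>2 * (\<phi> n x)\<^sup>2)" by (simp add: algebra_simps)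
        also have "\<dots> \<le> 2 * (B0\<^sup>2 * (\<phi> n x - w x)\<^sup>2) + 2 * ((c0 / pp x)\<^sup>2 * (\<phi> n x)\<^sup>2)"
          by (intro add_mono mult_left_mono mult_right_mono g2a g2b) auto
        also have "\<dots> = 2 * B0\<^sup>2 * (\<phi> n x - w x)\<^sup>2 + 2 * c0\<^sup>2 * ((\<phi> n x)\<^sup>2 / (pp x)\<^sup>2)"
          by (simp add: power_divide)
        finally have r: "(?g x)\<^sup>2 * (w x)\<^sup>2 \<le> 2 * B0\<^sup>2 * (\<phi> n x - w x)\<^sup>2 + 2 * c0\<^sup>2 * ((\<phi> n x)\<^sup>2 / (pp x)\<^sup>2)" .
        have "ennreal ((?g x)\<^sup>2 * (w x)\<^sup>2) \<le> ennreal (2 * B0\<^sup>2 * (\<phi> n x - w x)\<^sup>2 + 2 * c0\<^sup>2 * ((\<phi> n x)\<^sup>2 / (pp x)\<^sup>2))"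
          by (rule ennreal_leI[OF r])
        also have "\<dots> = ennreal (2 * B0\<^sup>2) * ennreal ((\<phi> n x - w x)\<^sup>2) + ennreal (2 * c0\<^sup>2) * ennreal ((\<phi> n x)\<^sup>2 / (pp x)\<^sup>2)"
          by (simp add: ennreal_plus[symmetric] ennreal_mult[symmetric] del: ennreal_plus)
        finally show ?thesis using True by simp
      qed
      have mA: "(\<lambda>x. indicator ?U x * ennreal ((\<phi> n x - w x)\<^sup>2)) \<in> borel_measurable lebesgue"
      proof -
        have cphi: "continuous_on UNIV (\<phi> n)" by (rule C1_cont[OF \<phi>(1)])
        have "(\<lambda>x. indicator ?U x * \<phi> n x) \<in> borel_measurable borel"
          using borel_measurable_continuous_onI[OF cphi] borel_Omab by measurable
        then have "(\<lambda>x. indicator ?U x * \<phi> n x) \<in> borel_measurable lebesgue" by (rule borel_leb)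
        then have "(\<lambda>x. ennreal ((indicator ?U x * \<phi> n x - indicator ?U x * w x)\<^sup>2)) \<in> borel_measurable lebesgue"
          using mw by measurable
        moreover have "(\<lambda>x. indicator ?U x * ennreal ((\<phi> n x - w x)\<^sup>2)) = (\<lambda>x. ennreal ((indicator ?U x * \<phi> n x - indicator ?U x * w x)\<^sup>2))"
          by (auto simp: fun_eq_iff split: split_indicator)
        ultimately show ?thesis by simp
      qed
      have mB: "(\<lambda>x. indicator ?U x * ennreal ((\<phi> n x)\<^sup>2 / (pp x)\<^sup>2)) \<in> borel_measurable lebesgue"
      proof -
        have cphi: "continuous_on UNIV (\<phi> n)" by (rule C1_cont[OF \<phi>(1)])
        have "(\<lambda>x. (\<phi> n x)\<^sup>2 / (pp x)\<^sup>2) \<in> borel_measurable borel"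
          using borel_measurable_continuous_onI[OF cphi] borel_measurable_continuous_onI[OF pp_cont] by measurable
        then show ?thesis by (intro borel_leb meas_indf borel_Omab)
      qed
      have "(\<integral>\<^sup>+ x. indicator ?U x * ennreal ((?g x)\<^sup>2 * (w x)\<^sup>2) \<partial>lebesgue)
         \<le> (\<integral>\<^sup>+ x. ennreal (2 * B0\<^sup>2) * (indicator ?U x * ennreal ((\<phi> n x - w x)\<^sup>2))
            + ennreal (2 * c0\<^sup>2) * (indicator ?U x * ennreal ((\<phi> n x)\<^sup>2 / (pp x)\<^sup>2)) \<partial>lebesgue)"
        by (intro nn_integral_mono pt)
      also have "\<dots> = ennreal (2 * B0\<^sup>2) * Xn n + ennreal (2 * c0\<^sup>2) * HI n"
        unfolding Xn_def HI_def sqint_def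
        using mA mB by (simp add: nn_integral_add nn_integral_cmult)
      also have "\<dots> \<le> ennreal (2 * B0\<^sup>2) * Xn n + ennreal (2 * c0\<^sup>2) * (4 * (2 * S + 2 * Yn n))"
      proof -
        have "HI n \<le> 4 * sqint ?U (q2 n)" unfolding HI_def by (rule hardy2d[OF \<phi>(1) \<phi>(2)])
        also have "sqint ?U (q2 n) \<le> 2 * S + 2 * Yn n"
        proof -
          have pt2: "indicator ?U x * ennreal ((q2 n x)\<^sup>2)
             \<le> 2 * (indicator ?U x * ennreal ((v2 x)\<^sup>2)) + 2 * (indicator ?U x * ennreal ((q2 n x - v2 x)\<^sup>2))" for x
          proof -
            have r: "(q2 n x)\<^sup>2 \<le> 2 * (v2 x)\<^sup>2 + 2 * (q2 n x - v2 x)\<^sup>2" by (rule sq_split2)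
            have "ennreal ((q2 n x)\<^sup>2) \<le> ennreal (2 * (v2 x)\<^sup>2 + 2 * (q2 n x - v2 x)\<^sup>2)" by (rule ennreal_leI[OF r])
            also have "\<dots> = 2 * ennreal ((v2 x)\<^sup>2) + 2 * ennreal ((q2 n x - v2 x)\<^sup>2)"
              by (simp add: ennreal_mult)
            finally show ?thesis by (cases "x \<in> ?U") (auto simp: distrib_left)
          qed
          have cq: "continuous_on UNIV (q2 n)" using \<phi>(1)[of n] unfolding C1_with_grad_def by blast
          have m1: "(\<lambda>x. indicator ?U x * ennreal ((v2 x)\<^sup>2)) \<in> borel_measurable lebesgue"
          proof -
            have "(\<lambda>x. ennreal ((indicator ?U x * v2 x)\<^sup>2)) \<in> borel_measurable lebesgue" using mv2 by measurable
            moreover have "(\<lambda>x. indicator ?U x * ennreal ((v2 x)\<^sup>2)) = (\<lambda>x. ennreal ((indicator ?U x * v2 x)\<^sup>2))"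
              by (auto simp: fun_eq_iff split: split_indicator)
            ultimately show ?thesis by simp
          qed
          have m2: "(\<lambda>x. indicator ?U x * ennreal ((q2 n x - v2 x)\<^sup>2)) \<in> borel_measurable lebesgue"
          proof -
            have "(\<lambda>x. indicator ?U x * q2 n x) \<in> borel_measurable borel"
              using borel_measurable_continuous_onI[OF cq] borel_Omab by measurable
            then have "(\<lambda>x. indicator ?U x * q2 n x) \<in> borel_measurable lebesgue" by (rule borel_leb)
            then have "(\<lambda>x. ennreal ((indicator ?U x * q2 n x - indicator ?U x * v2 x)\<^sup>2)) \<in> borel_measurable lebesgue"
              using mv2 by measurable
            moreover have "(\<lambda>x. indicator ?U x * ennreal ((q2 n x - v2 x)\<^sup>2)) = (\<lambda>x. ennreal ((indicator ?U x * q2 n x - indicator ?U x * v2 x)\<^sup>2))"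
              by (auto simp: fun_eq_iff split: split_indicator)
            ultimately show ?thesis by simp
          qed
          have "sqint ?U (q2 n) \<le> (\<integral>\<^sup>+x. 2 * (indicator ?U x * ennreal ((v2 x)\<^sup>2)) + 2 * (indicator ?U x * ennreal ((q2 n x - v2 x)\<^sup>2)) \<partial>lebesgue)"
            unfolding sqint_def by (intro nn_integral_mono pt2)
          also have "\<dots> = 2 * S + 2 * Yn n"
            unfolding S_def Yn_def sqint_def using m1 m2 by (simp add: nn_integral_add nn_integral_cmult)
          finally show ?thesis .
        qed
        finally have "HI n \<le> 4 * (2 * S + 2 * Yn n)" by (simp add: mult_left_mono)
        then show ?thesis by (intro add_left_mono mult_left_mono) auto
      qed
      finally show ?thesis .
    qed
    have lim: "(\<lambda>n. ennreal (2 * B0\<^sup>2) * Xn n + ennreal (2 * c0\<^sup>2) * (4 * (2 * S + 2 * Yn n)))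
        \<longlonglongrightarrow> ennreal (2 * B0\<^sup>2) * 0 + ennreal (2 * c0\<^sup>2) * (4 * (2 * S + 2 * 0))"
      using X Y unfolding Xn_def Yn_def
      by (intro tendsto_add ennreal_tendsto_cmult tendsto_const) (auto simp: top_unique)
    have "(\<integral>\<^sup>+ x. indicator ?U x * ennreal ((?g x)\<^sup>2 * (w x)\<^sup>2) \<partial>lebesgue)
       \<le> ennreal (2 * B0\<^sup>2) * 0 + ennreal (2 * c0\<^sup>2) * (4 * (2 * S + 2 * 0))"
      by (rule LIMSEQ_le_const[OF lim]) (use step in auto)
    also have "\<dots> = ennreal (64 * M1\<^sup>2 * \<Phi>\<^sup>2 * \<epsilon>\<^sup>2) * S"
    proof -
      have "ennreal (2 * c0\<^sup>2) * (4 * (2 * S)) = ennreal (2 * c0\<^sup>2) * ennreal 8 * S"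
        by (simp add: mult.assoc)
      also have "\<dots> = ennreal (64 * M1\<^sup>2 * \<Phi>\<^sup>2 * \<epsilon>\<^sup>2) * S"
        unfolding c0_def by (simp add: ennreal_mult[symmetric] power_mult_distrib del: ennreal_numeral) (simp add: algebra_simps)
      finally show ?thesis by simp
    qed
    finally show "(\<integral>\<^sup>+ x. indicator ?U x * ennreal ((?g x)\<^sup>2 * (w x)\<^sup>2) \<partial>lebesgue)
       \<le> ennreal (64 * M1\<^sup>2 * \<Phi>\<^sup>2 * \<epsilon>\<^sup>2) * sqint ?U v2" unfolding S_def .
  qed
qed


lemma sqrt2_le: "sqrt (a\<^sup>2 + b\<^sup>2) \<le> \<bar>a\<bar> + \<bar>b::real\<bar>"
proof -
  have "a\<^sup>2 + b\<^sup>2 \<le> (\<bar>a\<bar> + \<bar>b\<bar>)\<^sup>2" by (simp add: power2_eq_square algebra_simps)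
  then show ?thesis by (metis abs_ge_zero add_nonneg_nonneg real_sqrt_abs real_sqrt_le_mono abs_of_nonneg)
qed

lemma sqrt4_le: "sqrt (a\<^sup>2 + b\<^sup>2 + c\<^sup>2 + d\<^sup>2) \<le> \<bar>a\<bar> + \<bar>b\<bar> + \<bar>c\<bar> + \<bar>d::real\<bar>"
proof -
  have "a\<^sup>2 + b\<^sup>2 + c\<^sup>2 + d\<^sup>2 \<le> (\<bar>a\<bar> + \<bar>b\<bar> + \<bar>c\<bar> + \<bar>d\<bar>)\<^sup>2" by (simp add: power2_eq_square algebra_simps)
  then show ?thesis by (metis abs_ge_zero add_nonneg_nonneg real_sqrt_abs real_sqrt_le_mono abs_of_nonneg)
qed

lemma ennF: "F > 0 \<Longrightarrow> k \<ge> 0 \<Longrightarrow> ennreal (k / F ^ 4) * ennreal F = ennreal (k / F ^ 3)"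
proof -
  assume F: "F > 0" and k: "k \<ge> 0"
  have "k / F ^ 4 * F = k / F ^ 3" using F by (simp add: field_simps power_eq_if)
  then show ?thesis using F k by (simp add: ennreal_mult[symmetric])
qed

lemma inner_int:
  assumes k: "k \<ge> 0"
  shows "(\<integral>\<^sup>+y. indicator (Omega_ab f1 f2 a b) (t, y) * ennreal (k / (f2 t - f1 t) ^ 4) \<partial>lborel)
     = indicator {a<..<b} t * ennreal (k / (f2 t - f1 t) ^ 3)"
proof (cases "a < t \<and> t < b")
  case False
  then have "\<And>y. (t, y) \<notin> Omega_ab f1 f2 a b" unfolding Omega_ab_def by auto
  then show ?thesis using False by simp
next
  case True
  have F: "f2 t - f1 t > 0" using d_pos by (metis diff_gt_0_iff_gt order_less_le_trans)
  have "(\<lambda>y. indicator (Omega_ab f1 f2 a b) (t, y) * ennreal (k / (f2 t - f1 t) ^ 4))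
      = (\<lambda>y. ennreal (k / (f2 t - f1 t) ^ 4) * indicator {f1 t<..<f2 t} y)"
    using True unfolding Omega_ab_def Omega_def by (auto simp: fun_eq_iff split: split_indicator)
  then have "(\<integral>\<^sup>+y. indicator (Omega_ab f1 f2 a b) (t, y) * ennreal (k / (f2 t - f1 t) ^ 4) \<partial>lborel)
      = ennreal (k / (f2 t - f1 t) ^ 4) * emeasure lborel {f1 t<..<f2 t}"
    by (simp add: nn_integral_cmult_indicator)
  also have "\<dots> = ennreal (k / (f2 t - f1 t) ^ 4) * ennreal (f2 t - f1 t)" using F by simp
  also have "\<dots> = ennreal (k / (f2 t - f1 t) ^ 3)"
    using F k by (rule ennF)
  finally show ?thesis using True by simp
qed


lemma F_pos: "f2 t - f1 t > 0"
  using d_pos by (metis diff_gt_0_iff_gt order_less_le_trans)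

lemma part2:
  "bounded (range (\<lambda>t. deriv (deriv f1) t * (f2 t - f1 t))) \<and>
      bounded (range (\<lambda>t. deriv (deriv f2) t * (f2 t - f1 t))) \<longrightarrow>
      (\<forall>\<epsilon>. 0 < \<epsilon> \<and> \<epsilon> < 1 \<longrightarrow>
        (\<exists>C. \<forall>\<Phi>. 0 \<le> \<Phi> \<longrightarrow>
           (\<forall>x\<in>Omega f1 f2.
              flux_norm f1 f2 \<mu> \<epsilon> \<Phi> x \<le> C * \<Phi> / (f2 (fst x) - f1 (fst x)) \<and>
              flux_grad_norm f1 f2 \<mu> \<epsilon> \<Phi> x \<le> C * \<Phi> / (f2 (fst x) - f1 (fst x))\<^sup>2) \<and>
           (\<forall>a b. a < b \<longrightarrow>
              (\<integral>\<^sup>+ x. indicator (Omega_ab f1 f2 a b) x *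
                   ennreal ((flux_grad_norm f1 f2 \<mu> \<epsilon> \<Phi> x)\<^sup>2 +
                            (flux_norm f1 f2 \<mu> \<epsilon> \<Phi> x) ^ 4) \<partial>lebesgue)
              \<le> ennreal (C * (\<Phi>\<^sup>2 + \<Phi> ^ 4)) *
                 (\<integral>\<^sup>+ t. indicator {a<..<b} t * ennreal (1 / (f2 t - f1 t) ^ 3) \<partial>lebesgue))))"
proof (intro impI allI, elim conjE)
  fix \<epsilon> :: real
  assume bd1: "bounded (range (\<lambda>t. deriv (deriv f1) t * (f2 t - f1 t)))"
    and bd2: "bounded (range (\<lambda>t. deriv (deriv f2) t * (f2 t - f1 t)))" and e1: "0 < \<epsilon>" and e2: "\<epsilon> < 1"
  obtain G1 where G1: "\<And>t. \<bar>deriv (deriv f1) t * (f2 t - f1 t)\<bar> \<le> G1" using bd1 unfolding bounded_iff by auto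
  obtain G2 where G2: "\<And>t. \<bar>deriv (deriv f2) t * (f2 t - f1 t)\<bar> \<le> G2" using bd2 unfolding bounded_iff by auto
  define \<Gamma> where "\<Gamma> = max (max G1 G2) 0"
  have \<Gamma>: "0 \<le> \<Gamma>" "\<And>t. \<bar>deriv (deriv f1) t * (f2 t - f1 t)\<bar> \<le> \<Gamma>" "\<And>t. \<bar>deriv (deriv f2) t * (f2 t - f1 t)\<bar> \<le> \<Gamma>"
    unfolding \<Gamma>_def using G1 G2 by (auto intro: order_trans[OF _ max.cobounded1] order_trans[OF _ max.cobounded2])
  obtain \<beta>0 where \<beta>0: "\<beta>0 \<ge> 0" "\<And>t. \<bar>deriv f1 t\<bar> \<le> \<beta>0 \<and> \<bar>deriv f2 t\<bar> \<le> \<beta>0" using beta_bound by blast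
  define \<beta> where "\<beta> = max \<beta>0 1"
  have \<beta>: "1 \<le> \<beta>" "\<And>t. \<bar>deriv f1 t\<bar> \<le> \<beta>" "\<And>t. \<bar>deriv f2 t\<bar> \<le> \<beta>"
    unfolding \<beta>_def using \<beta>0 by (auto intro: order_trans[OF _ max.cobounded1])
  obtain M1 M2 where M: "0 \<le> M1" "0 \<le> M2" "\<And>s. \<bar>deriv \<mu> s\<bar> \<le> M1" "\<And>s. \<bar>deriv (deriv \<mu>) s\<bar> \<le> M2"
    using mu_bounds by blast
  define K where "K = 4 * \<beta>\<^sup>2 * (M1 + M2) + 2 * \<Gamma> * M1"
  define \<delta> where "\<delta> = exp (- 1 / \<epsilon>)"
  have \<delta>: "\<delta> > 0" unfolding \<delta>_def by simp
  define C1 where "C1 = max 1 (max (8 * K / \<delta>) (64 * K / \<delta>\<^sup>2))"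
  have C1: "1 \<le> C1" "8 * K / \<delta> \<le> C1" "64 * K / \<delta>\<^sup>2 \<le> C1" unfolding C1_def by auto
  define C where "C = C1 ^ 4"
  have C1C: "C1 \<le> C" unfolding C_def using C1(1) power_increasing[of 1 4 C1] by simp
  have C12: "C1\<^sup>2 \<le> C" unfolding C_def using C1(1) power_increasing[of 2 4 C1] by simp
  have pw: "flux_norm f1 f2 \<mu> \<epsilon> \<Phi> x \<le> C1 * \<Phi> / (f2 (fst x) - f1 (fst x)) \<and>
      flux_grad_norm f1 f2 \<mu> \<epsilon> \<Phi> x \<le> C1 * \<Phi> / (f2 (fst x) - f1 (fst x))\<^sup>2"
    if \<Phi>: "0 \<le> \<Phi>" and xO: "x \<in> Omega f1 f2" for \<Phi> :: real and x :: "real \<times> real"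
  proof -
    define F where "F = f2 (fst x) - f1 (fst x)"
    have F: "F > 0" unfolding F_def by (rule F_pos)
    define R where "R = 4 / (exp (- 1 / \<epsilon>) * (f2 (fst x) - f1 (fst x)))"
    note P = pointwise2[OF e1 e2 \<Phi> xO \<beta> \<Gamma> M, folded K_def R_def]
    have n: "flux_norm f1 f2 \<mu> \<epsilon> \<Phi> x \<le> 2 * (\<Phi> * K * R)"
      unfolding flux_norm_def using sqrt2_le[of "flux_g1 f1 f2 \<mu> \<epsilon> \<Phi> x" "flux_g2 f1 f2 \<mu> \<epsilon> \<Phi> x"] P(1,2) by linarith
    have "2 * (\<Phi> * K * R) = (8 * K / \<delta>) * (\<Phi> / F)" unfolding R_def \<delta>_def F_def using F \<delta> by (simp add: field_simps)
    also have "\<dots> \<le> C1 * (\<Phi> / F)" using C1(2) \<Phi> F by (intro mult_right_mono) auto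
    finally have n2: "flux_norm f1 f2 \<mu> \<epsilon> \<Phi> x \<le> C1 * \<Phi> / F" using n by simp
    have g: "flux_grad_norm f1 f2 \<mu> \<epsilon> \<Phi> x \<le> 4 * (\<Phi> * K * R\<^sup>2)"
      unfolding flux_grad_norm_def
      using sqrt4_le[of "pd1 (flux_g1 f1 f2 \<mu> \<epsilon> \<Phi>) x" "pd2 (flux_g1 f1 f2 \<mu> \<epsilon> \<Phi>) x" "pd1 (flux_g2 f1 f2 \<mu> \<epsilon> \<Phi>) x" "pd2 (flux_g2 f1 f2 \<mu> \<epsilon> \<Phi>) x"] P(3-6)
      by linarith
    have "4 * (\<Phi> * K * R\<^sup>2) = (64 * K / \<delta>\<^sup>2) * (\<Phi> / F\<^sup>2)" unfolding R_def \<delta>_def F_def using F \<delta> by (simp add: field_simps power2_eq_square)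
    also have "\<dots> \<le> C1 * (\<Phi> / F\<^sup>2)" using C1(3) \<Phi> F by (intro mult_right_mono) auto
    finally have g2: "flux_grad_norm f1 f2 \<mu> \<epsilon> \<Phi> x \<le> C1 * \<Phi> / F\<^sup>2" using g by simp
    show ?thesis using n2 g2 unfolding F_def by simp
  qed
  show "\<exists>C. \<forall>\<Phi>. 0 \<le> \<Phi> \<longrightarrow>
           (\<forall>x\<in>Omega f1 f2.
              flux_norm f1 f2 \<mu> \<epsilon> \<Phi> x \<le> C * \<Phi> / (f2 (fst x) - f1 (fst x)) \<and>
              flux_grad_norm f1 f2 \<mu> \<epsilon> \<Phi> x \<le> C * \<Phi> / (f2 (fst x) - f1 (fst x))\<^sup>2) \<and>
           (\<forall>a b. a < b \<longrightarrow>
              (\<integral>\<^sup>+ x. indicator (Omega_ab f1 f2 a b) x *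
                   ennreal ((flux_grad_norm f1 f2 \<mu> \<epsilon> \<Phi> x)\<^sup>2 +
                            (flux_norm f1 f2 \<mu> \<epsilon> \<Phi> x) ^ 4) \<partial>lebesgue)
              \<le> ennreal (C * (\<Phi>\<^sup>2 + \<Phi> ^ 4)) *
                 (\<integral>\<^sup>+ t. indicator {a<..<b} t * ennreal (1 / (f2 t - f1 t) ^ 3) \<partial>lebesgue))"
  proof (rule exI[of _ C], intro allI impI conjI ballI)
    fix \<Phi> :: real and x :: "real \<times> real" assume \<Phi>: "0 \<le> \<Phi>" and xO: "x \<in> Omega f1 f2"
    have F: "f2 (fst x) - f1 (fst x) > 0" by (rule F_pos)
    have "C1 * \<Phi> / (f2 (fst x) - f1 (fst x)) \<le> C * \<Phi> / (f2 (fst x) - f1 (fst x))"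
      using C1C \<Phi> F by (intro divide_right_mono mult_right_mono) auto
    then show "flux_norm f1 f2 \<mu> \<epsilon> \<Phi> x \<le> C * \<Phi> / (f2 (fst x) - f1 (fst x))" using pw[OF \<Phi> xO] by linarith
  next
    fix \<Phi> :: real and x :: "real \<times> real" assume \<Phi>: "0 \<le> \<Phi>" and xO: "x \<in> Omega f1 f2"
    have F: "f2 (fst x) - f1 (fst x) > 0" by (rule F_pos)
    have "C1 * \<Phi> / (f2 (fst x) - f1 (fst x))\<^sup>2 \<le> C * \<Phi> / (f2 (fst x) - f1 (fst x))\<^sup>2"
      using C1C \<Phi> F by (intro divide_right_mono mult_right_mono) auto
    then show "flux_grad_norm f1 f2 \<mu> \<epsilon> \<Phi> x \<le> C * \<Phi> / (f2 (fst x) - f1 (fst x))\<^sup>2" using pw[OF \<Phi> xO] by linarith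
  next
    fix \<Phi> a b :: real assume \<Phi>: "0 \<le> \<Phi>" and ab: "a < b"
    let ?U = "Omega_ab f1 f2 a b"
    define k where "k = C * (\<Phi>\<^sup>2 + \<Phi> ^ 4)"
    have k0: "k \<ge> 0" unfolding k_def C_def using C1(1) \<Phi> by simp
    have pt: "indicator ?U x * ennreal ((flux_grad_norm f1 f2 \<mu> \<epsilon> \<Phi> x)\<^sup>2 + (flux_norm f1 f2 \<mu> \<epsilon> \<Phi> x) ^ 4)
        \<le> indicator ?U x * ennreal (k / (f2 (fst x) - f1 (fst x)) ^ 4)" for x
    proof (cases "x \<in> ?U")
      case False then show ?thesis by simp
    next
      case True
      then have xO: "x \<in> Omega f1 f2" unfolding Omega_ab_def by auto
      define F where "F = f2 (fst x) - f1 (fst x)"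
      have F: "F > 0" unfolding F_def by (rule F_pos)
      define gn where "gn = flux_grad_norm f1 f2 \<mu> \<epsilon> \<Phi> x"
      define nn where "nn = flux_norm f1 f2 \<mu> \<epsilon> \<Phi> x"
      have gn0: "gn \<ge> 0" and nn0: "nn \<ge> 0" unfolding gn_def nn_def flux_grad_norm_def flux_norm_def by auto
      have gnb: "gn \<le> C1 * \<Phi> / F\<^sup>2" and nnb: "nn \<le> C1 * \<Phi> / F" using pw[OF \<Phi> xO] unfolding gn_def nn_def F_def by auto
      have "gn\<^sup>2 \<le> (C1 * \<Phi> / F\<^sup>2)\<^sup>2" by (rule power_mono[OF gnb gn0])
      also have "\<dots> = C1\<^sup>2 * \<Phi>\<^sup>2 / F ^ 4" by (simp add: power_divide power_mult_distrib flip: power_mult)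
      also have "\<dots> \<le> C * \<Phi>\<^sup>2 / F ^ 4" using C12 F by (intro divide_right_mono mult_right_mono) auto
      finally have a1: "gn\<^sup>2 \<le> C * \<Phi>\<^sup>2 / F ^ 4" .
      have "nn ^ 4 \<le> (C1 * \<Phi> / F) ^ 4" by (rule power_mono[OF nnb nn0])
      also have "\<dots> = C * \<Phi> ^ 4 / F ^ 4" unfolding C_def by (simp add: power_divide power_mult_distrib)
      finally have a2: "nn ^ 4 \<le> C * \<Phi> ^ 4 / F ^ 4" .
      have "gn\<^sup>2 + nn ^ 4 \<le> k / F ^ 4" using a1 a2 unfolding k_def by (simp add: add_divide_distrib distrib_left)
      then have "ennreal (gn\<^sup>2 + nn ^ 4) \<le> ennreal (k / F ^ 4)" by (rule ennreal_leI)
      then show ?thesis using True unfolding gn_def nn_def F_def by (simp del: ennreal_plus)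
    qed
    have cF: "continuous_on UNIV (\<lambda>t. f2 t - f1 t)" by (intro continuous_intros)
    have mh: "(\<lambda>x. k / (f2 (fst x) - f1 (fst x)) ^ 4) \<in> borel_measurable borel"
    proof (rule borel_measurable_continuous_onI)
      show "continuous_on UNIV (\<lambda>x. k / (f2 (fst x) - f1 (fst x)) ^ 4)"
        using F_pos by (intro continuous_intros) (auto simp: less_imp_neq[symmetric])
    qed
    have mh1: "(\<lambda>t. 1 / (f2 t - f1 t) ^ 3) \<in> borel_measurable borel"
    proof (rule borel_measurable_continuous_onI)
      show "continuous_on UNIV (\<lambda>t. 1 / (f2 t - f1 t) ^ 3)"
        using F_pos by (intro continuous_intros) (auto simp: less_imp_neq[symmetric])
    qed
    have "(\<integral>\<^sup>+ x. indicator ?U x * ennreal ((flux_grad_norm f1 f2 \<mu> \<epsilon> \<Phi> x)\<^sup>2 + (flux_norm f1 f2 \<mu> \<epsilon> \<Phi> x) ^ 4) \<partial>lebesgue)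
        \<le> (\<integral>\<^sup>+ x. indicator ?U x * ennreal (k / (f2 (fst x) - f1 (fst x)) ^ 4) \<partial>lebesgue)"
      by (intro nn_integral_mono pt)
    also have "\<dots> = (\<integral>\<^sup>+t. (\<integral>\<^sup>+y. indicator ?U (t, y) * ennreal (k / (f2 t - f1 t) ^ 4) \<partial>lborel) \<partial>lborel)"
      using tonelli2[OF meas_indf[OF borel_Omab mh]] by simp
    also have "\<dots> = (\<integral>\<^sup>+t. indicator {a<..<b} t * ennreal (k / (f2 t - f1 t) ^ 3) \<partial>lborel)"
      by (simp add: inner_int[OF k0])
    also have "\<dots> = (\<integral>\<^sup>+t. ennreal k * (indicator {a<..<b} t * ennreal (1 / (f2 t - f1 t) ^ 3)) \<partial>lborel)"
    proof (rule nn_integral_cong)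
      fix t :: real
      have "ennreal (k / (f2 t - f1 t) ^ 3) = ennreal k * ennreal (1 / (f2 t - f1 t) ^ 3)"
        using k0 F_pos[of t] by (simp add: ennreal_mult[symmetric])
      then show "indicator {a<..<b} t * ennreal (k / (f2 t - f1 t) ^ 3) = ennreal k * (indicator {a<..<b} t * ennreal (1 / (f2 t - f1 t) ^ 3))"
        by (simp add: ac_simps)
    qed
    also have "\<dots> = ennreal k * (\<integral>\<^sup>+t. indicator {a<..<b} t * ennreal (1 / (f2 t - f1 t) ^ 3) \<partial>lborel)"
      by (rule nn_integral_cmult) (use meas_indf[OF _ mh1, of "{a<..<b}"] in simp)
    also have "\<dots> = ennreal k * (\<integral>\<^sup>+t. indicator {a<..<b} t * ennreal (1 / (f2 t - f1 t) ^ 3) \<partial>lebesgue)"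
      by (simp add: nn_integral_completion)
    finally have fin: "(\<integral>\<^sup>+ x. indicator ?U x * ennreal ((flux_grad_norm f1 f2 \<mu> \<epsilon> \<Phi> x)\<^sup>2 + (flux_norm f1 f2 \<mu> \<epsilon> \<Phi> x) ^ 4) \<partial>lebesgue)
        \<le> ennreal k * (\<integral>\<^sup>+ t. indicator {a<..<b} t * ennreal (1 / (f2 t - f1 t) ^ 3) \<partial>lebesgue)" .
    then show "(\<integral>\<^sup>+ x. indicator ?U x * ennreal ((flux_grad_norm f1 f2 \<mu> \<epsilon> \<Phi> x)\<^sup>2 + (flux_norm f1 f2 \<mu> \<epsilon> \<Phi> x) ^ 4) \<partial>lebesgue)
        \<le> ennreal (C * (\<Phi>\<^sup>2 + \<Phi> ^ 4)) * (\<integral>\<^sup>+ t. indicator {a<..<b} t * ennreal (1 / (f2 t - f1 t) ^ 3) \<partial>lebesgue)"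
      unfolding k_def .
  qed
qed

end

theorem lemma3p1:
  fixes f1 f2 \<mu> :: "real \<Rightarrow> real"
  assumes f1_smooth: "smooth_fun f1" and f2_smooth: "smooth_fun f2"
    and d_pos: "\<exists>d>0. \<forall>t. d \<le> f2 t - f1 t"
    and beta_fin: "bounded (range (deriv f1))" "bounded (range (deriv f2))"
    and mu_smooth: "smooth_fun \<mu>"
    and mu_1: "\<forall>t\<ge>1. \<mu> t = 0" and mu_0: "\<forall>t\<le>0. \<mu> t = 1"
  shows
    "(\<exists>C. \<forall>\<epsilon> \<Phi> a b w v1 v2.
        0 < \<epsilon> \<and> \<epsilon> < 1 \<and> 0 \<le> \<Phi> \<and> a < b \<and>
        H1_weak (Omega_ab f1 f2 a b) w v1 v2 \<and>
        zero_trace_on (Omega_ab f1 f2 a b) (S2_ab f2 a b) w v1 v2 \<longrightarrow>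
        (\<integral>\<^sup>+ x. indicator (Omega_ab f1 f2 a b) x *
             ennreal ((flux_g1 f1 f2 \<mu> \<epsilon> \<Phi> x)\<^sup>2 * (w x)\<^sup>2) \<partial>lebesgue)
        \<le> ennreal (C * \<Phi>\<^sup>2 * \<epsilon>\<^sup>2) * sqint (Omega_ab f1 f2 a b) v2)
     \<and>
     (bounded (range (\<lambda>t. deriv (deriv f1) t * (f2 t - f1 t))) \<and>
      bounded (range (\<lambda>t. deriv (deriv f2) t * (f2 t - f1 t))) \<longrightarrow>
      (\<forall>\<epsilon>. 0 < \<epsilon> \<and> \<epsilon> < 1 \<longrightarrow>
        (\<exists>C. \<forall>\<Phi>. 0 \<le> \<Phi> \<longrightarrow>
           (\<forall>x\<in>Omega f1 f2.
              flux_norm f1 f2 \<mu> \<epsilon> \<Phi> x \<le> C * \<Phi> / (f2 (fst x) - f1 (fst x)) \<and>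
              flux_grad_norm f1 f2 \<mu> \<epsilon> \<Phi> x \<le> C * \<Phi> / (f2 (fst x) - f1 (fst x))\<^sup>2) \<and>
           (\<forall>a b. a < b \<longrightarrow>
              (\<integral>\<^sup>+ x. indicator (Omega_ab f1 f2 a b) x *
                   ennreal ((flux_grad_norm f1 f2 \<mu> \<epsilon> \<Phi> x)\<^sup>2 +
                            (flux_norm f1 f2 \<mu> \<epsilon> \<Phi> x) ^ 4) \<partial>lebesgue)
              \<le> ennreal (C * (\<Phi>\<^sup>2 + \<Phi> ^ 4)) *
                 (\<integral>\<^sup>+ t. indicator {a<..<b} t * ennreal (1 / (f2 t - f1 t) ^ 3) \<partial>lebesgue)))))"
  proof -
  interpret chan f1 f2 \<mu>
    using assms by unfold_locales auto
  show ?thesis by (intro conjI part1 part2)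
qed

end
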